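(* Let $\Gamma$ be a distance-regular graph with classical parameters $(D,b,\alpha,\beta)$ such that $b\ge2$, $b-1\ge\alpha\ge1$ and $D\ge3$, geometric with respect to a set $\mathcal C$ of Delsarte cliques (so $\Gamma$ is the point graph of the partial linear space $(V(\Gamma),\mathcal C,\in)$; members of $\mathcal C$ are called lines). Let $r=[D]$. Assume $\Gamma$ satisfies the dual Pasch axiom. Let $\ell$ be a line, $M$ an assembly and $u$ a vertex not in $M$. Then: (1) if $\ell\cap M\ne\emptyset$, then $|\ell\cap M|=\alpha+1$; (2) if $u$ has a neighbour in $M$, then $u$ has exactly $\alpha+1$ neighbours in $M$ and exactly one line through $u$ intersects $M$. Consequently, for every vertex $x$ the local graph at $x$ is the $\alpha$-clique extension of a $\frac{\beta}{\alpha}\times r$-grid.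
   Context: Distance-regular graph with intersection numbers $b_i,c_i$, valency $k=b_0$. For integer $b\ne1$, $[j]=\frac{b^j-1}{b-1}$. Classical parameters $(D,b,\alpha,\beta)$: diameter $D$, $b_i=([D]-[i])(\beta-\alpha[i])$, $c_i=[i](1+\alpha[i-1])$. A Delsarte clique is a clique with $1+\frac{k}{-\theta_{\min}}$ vertices, $\theta_{\min}$ the smallest adjacency eigenvalue; geometric with respect to $\mathcal C$ means every edge lies in exactly one member of $\mathcal C$. Dual Pasch axiom: for any two adjacent vertices $x,y$, the set of common neighbours of $x$ and $y$ not on the line through $x$ and $y$ is a clique. An assembly is a maximal clique of $\Gamma$ not in $\mathcal C$. The local graph at $x$ is the subgraph induced on the neighbours of $x$. The $m\times n$-grid is $K_m\Box K_n$; the $s$-clique extension of a graph $\Delta$ replaces each vertex $x$ by an $s$-clique $\tilde X$, with $u\in\tilde X$, $v\in\tilde Y$ ($\tilde X\ne\tilde Y$) adjacent iff $x\sim y$ in $\Delta$. *)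

theory Defs
  imports Main "HOL.Real"
begin

definition simple_graph :: "'a set \<Rightarrow> ('a \<Rightarrow> 'a \<Rightarrow> bool) \<Rightarrow> bool" where
  "simple_graph V adj \<longleftrightarrow> finite V \<and> V \<noteq> {} \<and>
     (\<forall>x y. adj x y \<longrightarrow> x \<in> V \<and> y \<in> V) \<and>
     (\<forall>x y. adj x y \<longrightarrow> adj y x) \<and> (\<forall>x. \<not> adj x x)"

fun walk :: "'a set \<Rightarrow> ('a \<Rightarrow> 'a \<Rightarrow> bool) \<Rightarrow> nat \<Rightarrow> 'a \<Rightarrow> 'a \<Rightarrow> bool" where
  "walk V adj 0 x y = (x = y \<and> x \<in> V)"
| "walk V adj (Suc n) x y = (\<exists>z\<in>V. adj x z \<and> walk V adj n z y)"

definition connected_graph :: "'a set \<Rightarrow> ('a \<Rightarrow> 'a \<Rightarrow> bool) \<Rightarrow> bool" where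
  "connected_graph V adj \<longleftrightarrow> (\<forall>x\<in>V. \<forall>y\<in>V. \<exists>n. walk V adj n x y)"

text \<open>Path-length distance (meaningful in a connected graph).\<close>
definition gdist :: "'a set \<Rightarrow> ('a \<Rightarrow> 'a \<Rightarrow> bool) \<Rightarrow> 'a \<Rightarrow> 'a \<Rightarrow> nat" where
  "gdist V adj x y = (LEAST n. walk V adj n x y)"

text \<open>Gaussian integer [j] = (b^j - 1)/(b - 1).\<close>
definition qint :: "int \<Rightarrow> nat \<Rightarrow> real" where
  "qint b j = (real_of_int b ^ j - 1) / (real_of_int b - 1)"

definition classical_drg ::
  "'a set \<Rightarrow> ('a \<Rightarrow> 'a \<Rightarrow> bool) \<Rightarrow> nat \<Rightarrow> int \<Rightarrow> real \<Rightarrow> real \<Rightarrow> bool" where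
  "classical_drg V adj D b \<alpha> \<beta> \<longleftrightarrow>
     simple_graph V adj \<and> connected_graph V adj \<and>
     (\<forall>x\<in>V. \<forall>y\<in>V. gdist V adj x y \<le> D) \<and>
     (\<exists>x\<in>V. \<exists>y\<in>V. gdist V adj x y = D) \<and>
     (\<forall>x\<in>V. \<forall>y\<in>V. \<forall>i. gdist V adj x y = i \<longrightarrow>
        real (card {z\<in>V. adj y z \<and> gdist V adj x z = i + 1})
          = (qint b D - qint b i) * (\<beta> - \<alpha> * qint b i)) \<and>
     (\<forall>x\<in>V. \<forall>y\<in>V. \<forall>i. gdist V adj x y = i \<longrightarrow> 1 \<le> i \<longrightarrow>
        real (card {z\<in>V. adj y z \<and> gdist V adj x z = i - 1})
          = qint b i * (1 + \<alpha> * qint b (i - 1)))"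

definition is_clique :: "'a set \<Rightarrow> ('a \<Rightarrow> 'a \<Rightarrow> bool) \<Rightarrow> 'a set \<Rightarrow> bool" where
  "is_clique V adj C \<longleftrightarrow> C \<subseteq> V \<and> (\<forall>x\<in>C. \<forall>y\<in>C. x \<noteq> y \<longrightarrow> adj x y)"

definition maximal_clique :: "'a set \<Rightarrow> ('a \<Rightarrow> 'a \<Rightarrow> bool) \<Rightarrow> 'a set \<Rightarrow> bool" where
  "maximal_clique V adj C \<longleftrightarrow> is_clique V adj C \<and>
     (\<forall>C'. is_clique V adj C' \<longrightarrow> C \<subseteq> C' \<longrightarrow> C' = C)"

definition adj_eigenvalues :: "'a set \<Rightarrow> ('a \<Rightarrow> 'a \<Rightarrow> bool) \<Rightarrow> real set" where
  "adj_eigenvalues V adj = {ev. \<exists>f :: 'a \<Rightarrow> real. (\<exists>v\<in>V. f v \<noteq> 0) \<and>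
      (\<forall>x\<in>V. (\<Sum>y\<in>V. if adj x y then f y else 0) = ev * f x)}"

definition theta_min :: "'a set \<Rightarrow> ('a \<Rightarrow> 'a \<Rightarrow> bool) \<Rightarrow> real" where
  "theta_min V adj = Min (adj_eigenvalues V adj)"

text \<open>Valency of a regular graph (degree of an arbitrary vertex).\<close>
definition valency :: "'a set \<Rightarrow> ('a \<Rightarrow> 'a \<Rightarrow> bool) \<Rightarrow> nat" where
  "valency V adj = card {y\<in>V. adj (SOME x. x \<in> V) y}"

definition delsarte_clique :: "'a set \<Rightarrow> ('a \<Rightarrow> 'a \<Rightarrow> bool) \<Rightarrow> 'a set \<Rightarrow> bool" where
  "delsarte_clique V adj C \<longleftrightarrow> is_clique V adj C \<and>
     real (card C) = 1 + real (valency V adj) / (- theta_min V adj)"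

definition geometric :: "'a set \<Rightarrow> ('a \<Rightarrow> 'a \<Rightarrow> bool) \<Rightarrow> 'a set set \<Rightarrow> bool" where
  "geometric V adj \<C> \<longleftrightarrow> (\<forall>C\<in>\<C>. delsarte_clique V adj C) \<and>
     (\<forall>x y. adj x y \<longrightarrow> (\<exists>!C. C \<in> \<C> \<and> x \<in> C \<and> y \<in> C))"

definition line_through :: "'a set set \<Rightarrow> 'a \<Rightarrow> 'a \<Rightarrow> 'a set" where
  "line_through \<C> x y = (THE C. C \<in> \<C> \<and> x \<in> C \<and> y \<in> C)"

definition dual_pasch :: "'a set \<Rightarrow> ('a \<Rightarrow> 'a \<Rightarrow> bool) \<Rightarrow> 'a set set \<Rightarrow> bool" where
  "dual_pasch V adj \<C> \<longleftrightarrow> (\<forall>x y. adj x y \<longrightarrow>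
     is_clique V adj {z\<in>V. adj x z \<and> adj y z \<and> z \<notin> line_through \<C> x y})"

definition assembly :: "'a set \<Rightarrow> ('a \<Rightarrow> 'a \<Rightarrow> bool) \<Rightarrow> 'a set set \<Rightarrow> 'a set \<Rightarrow> bool" where
  "assembly V adj \<C> M \<longleftrightarrow> maximal_clique V adj M \<and> M \<notin> \<C>"

definition graph_iso :: "'a set \<Rightarrow> ('a \<Rightarrow> 'a \<Rightarrow> bool) \<Rightarrow> 'b set \<Rightarrow> ('b \<Rightarrow> 'b \<Rightarrow> bool) \<Rightarrow> bool" where
  "graph_iso A adjA B adjB \<longleftrightarrow> (\<exists>f. bij_betw f A B \<and>
     (\<forall>u\<in>A. \<forall>v\<in>A. adjA u v \<longleftrightarrow> adjB (f u) (f v)))"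

definition local_vertices :: "'a set \<Rightarrow> ('a \<Rightarrow> 'a \<Rightarrow> bool) \<Rightarrow> 'a \<Rightarrow> 'a set" where
  "local_vertices V adj x = {y\<in>V. adj x y}"

definition local_adj :: "'a set \<Rightarrow> ('a \<Rightarrow> 'a \<Rightarrow> bool) \<Rightarrow> 'a \<Rightarrow> 'a \<Rightarrow> 'a \<Rightarrow> bool" where
  "local_adj V adj x u v \<longleftrightarrow> u \<in> local_vertices V adj x \<and> v \<in> local_vertices V adj x \<and> adj u v"

definition grid_vertices :: "nat \<Rightarrow> nat \<Rightarrow> (nat \<times> nat) set" where
  "grid_vertices m n = {0..<m} \<times> {0..<n}"

definition grid_adj :: "(nat \<times> nat) \<Rightarrow> (nat \<times> nat) \<Rightarrow> bool" where
  "grid_adj p q \<longleftrightarrow> (fst p = fst q \<and> snd p \<noteq> snd q) \<or> (fst p \<noteq> fst q \<and> snd p = snd q)"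

text \<open>s-clique extension of (W, adjW): each vertex replaced by an s-clique.\<close>
definition cext_vertices :: "nat \<Rightarrow> 'b set \<Rightarrow> ('b \<times> nat) set" where
  "cext_vertices s W = W \<times> {0..<s}"

definition cext_adj :: "('b \<Rightarrow> 'b \<Rightarrow> bool) \<Rightarrow> ('b \<times> nat) \<Rightarrow> ('b \<times> nat) \<Rightarrow> bool" where
  "cext_adj adjW p q \<longleftrightarrow> (fst p = fst q \<and> snd p \<noteq> snd q) \<or> (fst p \<noteq> fst q \<and> adjW (fst p) (fst q))"

end

theory Submission
  imports Defs "HOL-Computational_Algebra.Polynomial"
begin



lemma walk_snoc: "walk V adj n x y \<Longrightarrow> adj y z \<Longrightarrow> z \<in> V \<Longrightarrow> walk V adj (Suc n) x z"
  by (induction n arbitrary: x) auto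

lemma qint_sum: "b \<noteq> 1 \<Longrightarrow> qint b j = (\<Sum>i<j. real_of_int b ^ i)"
  unfolding qint_def by (subst geometric_sum) auto

locale setting =
  fixes V :: "'a set" and adj :: "'a \<Rightarrow> 'a \<Rightarrow> bool" and CC :: "'a set set"
    and D :: nat and b :: int and \<alpha> \<beta> :: real
  assumes drg: "classical_drg V adj D b \<alpha> \<beta>"
    and hb: "b \<ge> 2" and ha2: "\<alpha> \<ge> 1" and hD: "D \<ge> 3"
    and geom: "geometric V adj CC"
    and pasch: "dual_pasch V adj CC"
begin

abbreviation "q \<equiv> qint b"
definition "bb i = (q D - q i) * (\<beta> - \<alpha> * q i)"
definition "cc i = q i * (1 + \<alpha> * q (i - 1))"
definition "kk = q D * \<beta>"
definition "aa i = kk - bb i - cc i"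
abbreviation "d \<equiv> gdist V adj"

lemma q_Suc: "q (Suc i) = q i + real_of_int b ^ i"
  using hb by (simp add: qint_sum)
lemma q0[simp]: "q 0 = 0" by (simp add: qint_def)
lemma q1[simp]: "q 1 = 1" using hb by (simp add: qint_def)
lemma q1'[simp]: "q (Suc 0) = 1" using hb by (simp add: qint_def)
lemma q_mono: "i \<le> j \<Longrightarrow> q i \<le> q j"
proof (induction j)
  case 0 then show ?case by simp
next
  case (Suc j)
  have "0 \<le> real_of_int b ^ j" using hb by simp
  with Suc show ?case by (cases "i = Suc j") (auto simp: q_Suc le_Suc_eq)
qed
lemma q_strict: "i < j \<Longrightarrow> q i < q j"
proof (induction j)
  case 0 then show ?case by simp
next
  case (Suc j)
  have "q j < q (Suc j)" using hb by (simp add: q_Suc)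
  with Suc show ?case by (cases "i = j") auto
qed
lemma q_ge: "real i \<le> q i"
proof (induction i)
  case 0 then show ?case by simp
next
  case (Suc i)
  have "1 \<le> real_of_int b ^ i" using hb by simp
  with Suc show ?case by (simp add: q_Suc)
qed
lemma qD_ge: "q D \<ge> 3" using q_ge[of D] hD by simp

lemma simple: "simple_graph V adj" using drg by (simp add: classical_drg_def)
lemma finV: "finite V" using simple by (simp add: simple_graph_def)
lemma Vne: "V \<noteq> {}" using simple by (simp add: simple_graph_def)
lemma adjV: "adj x y \<Longrightarrow> x \<in> V \<and> y \<in> V" using simple by (simp add: simple_graph_def)
lemma adj_sym: "adj x y \<Longrightarrow> adj y x" using simple by (simp add: simple_graph_def)
lemma adj_irr: "\<not> adj x x" using simple by (simp add: simple_graph_def)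
lemma walk_in: "walk V adj n x y \<Longrightarrow> y \<in> V"
  by (induction n arbitrary: x) auto
lemma walk_Suc_end: "walk V adj (Suc n) x z \<Longrightarrow> \<exists>y\<in>V. walk V adj n x y \<and> adj y z"
proof (induction n arbitrary: x)
  case 0 then show ?case using adjV by auto
next
  case (Suc n)
  from Suc.prems obtain x1 where x1: "x1 \<in> V" "adj x x1" "walk V adj (Suc n) x1 z" by auto
  from Suc.IH[OF x1(3)] obtain y where "y \<in> V" "walk V adj n x1 y" "adj y z" by auto
  with x1 show ?case by auto
qed

lemma conn: "x \<in> V \<Longrightarrow> y \<in> V \<Longrightarrow> \<exists>n. walk V adj n x y"
  using drg by (simp add: classical_drg_def connected_graph_def)
lemma diam: "x \<in> V \<Longrightarrow> y \<in> V \<Longrightarrow> d x y \<le> D"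
  using drg by (simp add: classical_drg_def)
lemma bcond: "x \<in> V \<Longrightarrow> y \<in> V \<Longrightarrow>
   real (card {z\<in>V. adj y z \<and> d x z = d x y + 1}) = bb (d x y)"
  using drg by (simp add: classical_drg_def bb_def)
lemma ccond: "x \<in> V \<Longrightarrow> y \<in> V \<Longrightarrow> 1 \<le> d x y \<Longrightarrow>
   real (card {z\<in>V. adj y z \<and> d x z = d x y - 1}) = cc (d x y)"
  using drg by (simp add: classical_drg_def cc_def)

lemma walk_d: "x \<in> V \<Longrightarrow> y \<in> V \<Longrightarrow> walk V adj (d x y) x y"
  unfolding gdist_def using conn by (meson LeastI_ex)
lemma d_le: "walk V adj n x y \<Longrightarrow> d x y \<le> n"
  unfolding gdist_def by (rule Least_le)
lemma d0: "x \<in> V \<Longrightarrow> d x x = 0"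
  using d_le[of 0 x x] by simp
lemma d0_iff: "x \<in> V \<Longrightarrow> y \<in> V \<Longrightarrow> d x y = 0 \<longleftrightarrow> x = y"
  using walk_d[of x y] d0 by fastforce
lemma d1_iff: "x \<in> V \<Longrightarrow> y \<in> V \<Longrightarrow> d x y = 1 \<longleftrightarrow> adj x y"
proof
  assume "x \<in> V" "y \<in> V" "d x y = 1"
  then show "adj x y" using walk_d[of x y] by auto
next
  assume a: "x \<in> V" "y \<in> V" "adj x y"
  then have "walk V adj 1 x y" by auto
  then have "d x y \<le> 1" by (rule d_le)
  moreover have "d x y \<noteq> 0" using a d0_iff adj_irr by metis
  ultimately show "d x y = 1" by simp
qed
lemma d_adj: "x \<in> V \<Longrightarrow> adj y z \<Longrightarrow> d x z \<le> d x y + 1"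
proof -
  assume "x \<in> V" "adj y z"
  have yz: "y \<in> V" "z \<in> V" using adjV \<open>adj y z\<close> by auto
  have "walk V adj (Suc (d x y)) x z"
    by (rule walk_snoc[OF walk_d[OF \<open>x \<in> V\<close> yz(1)] \<open>adj y z\<close> yz(2)])
  then show ?thesis using d_le by fastforce
qed
lemma d2: "adj y x \<Longrightarrow> adj x z \<Longrightarrow> d y z \<le> 2"
proof -
  assume "adj y x" "adj x z"
  then have "walk V adj 2 y z" using adjV by (auto simp: numeral_2_eq_2)
  then show ?thesis by (rule d_le)
qed

lemma degree: "z \<in> V \<Longrightarrow> real (card {y\<in>V. adj z y}) = kk"
proof -
  assume z: "z \<in> V"
  have "{y\<in>V. adj z y} = {y\<in>V. adj z y \<and> d z y = d z z + 1}"
    unfolding d0[OF z] using d1_iff[OF z] by auto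
  then show ?thesis using bcond[OF z z] d0[OF z] by (simp add: bb_def kk_def)
qed

end


context setting begin

lemma exD: "\<exists>x\<in>V. \<exists>y\<in>V. d x y = D"
  using drg by (simp add: classical_drg_def)

lemma bbD1_pos: "bb (D - 1) > 0"
proof -
  obtain x y where xy: "x \<in> V" "y \<in> V" "d x y = D" using exD by auto
  have "walk V adj (Suc (D - 1)) x y" using walk_d[OF xy(1,2)] xy(3) hD by simp
  then obtain z where z: "z \<in> V" "walk V adj (D - 1) x z" "adj z y" using walk_Suc_end by blast
  have "d x z \<le> D - 1" using d_le[OF z(2)] .
  moreover have "D \<le> d x z + 1" using d_adj[OF xy(1) z(3)] xy(3) by simp
  ultimately have dz: "d x z = D - 1" by simp
  have "y \<in> {w\<in>V. adj z w \<and> d x w = d x z + 1}" using xy z dz hD by auto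
  then have "card {w\<in>V. adj z w \<and> d x w = d x z + 1} \<noteq> 0"
    using finV by (metis (no_types, lifting) card_0_eq empty_iff finite_subset mem_Collect_eq subsetI)
  then have "real (card {w\<in>V. adj z w \<and> d x w = d x z + 1}) > 0" by simp
  then show ?thesis using bcond[OF xy(1) z(1)] dz by simp
qed

lemma betapos_D1: "\<beta> - \<alpha> * q (D - 1) > 0"
proof -
  have "q D - q (D - 1) > 0" using q_strict[of "D - 1" D] hD by simp
  then show ?thesis using bbD1_pos unfolding bb_def by (simp add: zero_less_mult_iff)
qed

lemma betapos: "i < D \<Longrightarrow> \<beta> - \<alpha> * q i > 0"
proof -
  assume "i < D"
  then have "q i \<le> q (D - 1)" by (intro q_mono) simp
  then have "\<alpha> * q i \<le> \<alpha> * q (D - 1)" using ha2 by (simp add: mult_left_mono)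
  then show ?thesis using betapos_D1 by simp
qed

lemma beta_gt: "\<beta> > \<alpha>" using betapos[of 1] hD by simp
lemma beta_pos: "\<beta> > 0" using beta_gt ha2 by simp

lemma bb_pos: "i < D \<Longrightarrow> bb i > 0"
  unfolding bb_def using betapos q_strict by simp
lemma bbD: "bb D = 0" by (simp add: bb_def)
lemma cc_pos: "1 \<le> i \<Longrightarrow> cc i > 0"
proof -
  assume "1 \<le> i"
  then have "q i \<ge> 1" using q_ge[of i] by simp
  moreover have "q (i - 1) \<ge> 0" using q_ge[of "i - 1"] by simp
  then have "1 + \<alpha> * q (i - 1) \<ge> 1" using ha2 by simp
  ultimately show ?thesis unfolding cc_def by (simp add: zero_less_mult_iff)
qed
lemma cc0: "cc 0 = 0" by (simp add: cc_def)
lemma cc1: "cc 1 = 1" by (simp add: cc_def)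
lemma aa0: "aa 0 = 0" by (simp add: aa_def bb_def kk_def cc_def)
lemma kk_pos: "kk > 0" unfolding kk_def using qD_ge beta_pos by simp

definition "rr i = - (1 + \<alpha> * q i) / (\<beta> - \<alpha> * q i)"
definition "w i = (\<Prod>j<i. rr j)"

lemma w0[simp]: "w 0 = 1" by (simp add: w_def)
lemma wSuc: "w (Suc i) = w i * rr i" by (simp add: w_def)

lemma L1: "i \<le> D \<Longrightarrow> bb i * w (Suc i) = - (q D - q i) * (1 + \<alpha> * q i) * w i"
proof (cases "i = D")
  case True then show ?thesis by (simp add: bb_def)
next
  case False
  assume "i \<le> D"
  then have "i < D" using False by simp
  then have "\<beta> - \<alpha> * q i \<noteq> 0" using betapos by (metis less_irrefl)
  then show ?thesis by (simp add: wSuc rr_def bb_def field_simps)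
qed

lemma L2: "1 \<le> i \<Longrightarrow> i \<le> D \<Longrightarrow> cc i * w (i - 1) = - q i * (\<beta> - \<alpha> * q (i - 1)) * w i"
proof -
  assume "1 \<le> i" "i \<le> D"
  then obtain j where j: "i = Suc j" "j < D" by (metis Suc_le_eq less_eq_Suc_le not0_implies_Suc not_one_le_zero)
  then have ne: "\<beta> - \<alpha> * q j \<noteq> 0" using betapos by (metis less_irrefl)
  show ?thesis using ne by (simp add: j wSuc rr_def cc_def field_simps)
qed

lemma Eig: "i \<le> D \<Longrightarrow> cc i * w (i - 1) + aa i * w i + bb i * w (Suc i) = - q D * w i"
proof (cases "i = 0")
  case True
  then show ?thesis using beta_pos by (simp add: cc0 aa0 bb_def wSuc rr_def field_simps)
next
  case False
  assume iD: "i \<le> D"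
  have e1: "cc i * w (i - 1) = - q i * (\<beta> - \<alpha> * q (i - 1)) * w i" using L2 False iD by simp
  have e2: "bb i * w (Suc i) = - (q D - q i) * (1 + \<alpha> * q i) * w i" using L1 iD by simp
  have "cc i * w (i - 1) + aa i * w i + bb i * w (Suc i) =
     - q i * (\<beta> - \<alpha> * q (i - 1)) * w i + aa i * w i - (q D - q i) * (1 + \<alpha> * q i) * w i"
    using e1 e2 by (simp add: algebra_simps)
  also have "\<dots> = - q D * w i" unfolding aa_def kk_def bb_def cc_def by (simp add: algebra_simps)
  finally show ?thesis .
qed

end


context setting begin

fun Vf :: "real \<Rightarrow> nat \<Rightarrow> real" where
  "Vf t 0 = 1"
| "Vf t (Suc 0) = t"
| "Vf t (Suc (Suc i)) = ((t - aa (Suc i)) * Vf t (Suc i) - bb i * Vf t i) / cc (Suc (Suc i))"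

definition "FF t = (t - aa D) * Vf t D - bb (D - 1) * Vf t (D - 1)"

definition "Kf i = (\<Prod>j<i. bb j / cc (Suc j))"

lemma KfSuc: "Kf (Suc i) = Kf i * bb i / cc (Suc i)" by (simp add: Kf_def)

lemma Kf_pos: "i \<le> D \<Longrightarrow> Kf i > 0"
  unfolding Kf_def using bb_pos cc_pos by (intro prod_pos) auto

lemma Vf_thD: "i \<le> D \<Longrightarrow> Vf (- q D) i = Kf i * w i \<and> (Suc i \<le> D \<longrightarrow> Vf (- q D) (Suc i) = Kf (Suc i) * w (Suc i))"
proof (induction i)
  case 0
  have "w 1 = - 1 / \<beta>" by (simp add: w_def rr_def)
  moreover have "Kf 1 = q D * \<beta>" by (simp add: Kf_def bb_def cc_def)
  ultimately show ?case using beta_pos by (simp add: Kf_def)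
next
  case (Suc i)
  then have IH: "Vf (- q D) i = Kf i * w i" "Vf (- q D) (Suc i) = Kf (Suc i) * w (Suc i)" by auto
  show ?case
  proof (intro conjI impI)
    show "Vf (- q D) (Suc i) = Kf (Suc i) * w (Suc i)" by (rule IH(2))
  next
    assume h: "Suc (Suc i) \<le> D"
    have E: "cc (Suc i) * w i + aa (Suc i) * w (Suc i) + bb (Suc i) * w (Suc (Suc i)) = - q D * w (Suc i)"
      using Eig[of "Suc i"] h by simp
    have bi: "bb i * Kf i = Kf (Suc i) * cc (Suc i)"
      using cc_pos[of "Suc i"] by (simp add: KfSuc field_simps)
    have c2: "cc (Suc (Suc i)) > 0" using cc_pos by simp
    have "Vf (- q D) (Suc (Suc i)) = ((- q D - aa (Suc i)) * (Kf (Suc i) * w (Suc i)) - bb i * (Kf i * w i)) / cc (Suc (Suc i))"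
      using IH by simp
    also have "\<dots> = Kf (Suc i) * ((- q D - aa (Suc i)) * w (Suc i) - cc (Suc i) * w i) / cc (Suc (Suc i))"
      using bi by (simp add: algebra_simps)
    also have "\<dots> = Kf (Suc i) * (bb (Suc i) * w (Suc (Suc i))) / cc (Suc (Suc i))"
    proof -
      have E': "bb (Suc i) * w (Suc (Suc i)) = (- q D - aa (Suc i)) * w (Suc i) - cc (Suc i) * w i"
        using E by (simp add: algebra_simps)
      show ?thesis by (simp only: E')
    qed
    also have "\<dots> = Kf (Suc (Suc i)) * w (Suc (Suc i))"
      using c2 by (simp add: KfSuc field_simps)
    finally show "Vf (- q D) (Suc (Suc i)) = Kf (Suc (Suc i)) * w (Suc (Suc i))" .
  qed
qed

lemma FF_thD: "FF (- q D) = 0"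
proof -
  define j where "j = D - 1"
  have jD: "Suc j = D" using hD unfolding j_def by simp
  have V1: "Vf (- q D) D = Kf D * w D" "Vf (- q D) j = Kf j * w j" using Vf_thD[of D] Vf_thD[of j] jD by auto
  have E: "cc D * w j + aa D * w D + bb D * w (Suc D) = - q D * w D" using Eig[of D] jD by (simp add: j_def)
  have KD: "Kf D = Kf j * bb j / cc D" using KfSuc[of j] unfolding jD .
  have bi: "bb j * Kf j = Kf D * cc D"
    using cc_pos[of D] hD unfolding KD by (simp add: field_simps)
  have "FF (- q D) = (- q D - aa D) * (Kf D * w D) - bb j * (Kf j * w j)"
    unfolding FF_def using V1 by (simp add: j_def)
  also have "\<dots> = Kf D * ((- q D - aa D) * w D - cc D * w j)" using bi by (simp add: algebra_simps)
  also have "\<dots> = 0" using E bbD by (simp add: algebra_simps)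
  finally show ?thesis .
qed

lemma w_sign: "(-1) ^ i * w i > 0" if "i \<le> D"
proof -
  have "(-1) ^ i * w i = (\<Prod>j<i. (1 + \<alpha> * q j) / (\<beta> - \<alpha> * q j))"
    unfolding w_def rr_def
    by (induction i) (auto simp: algebra_simps)
  also have "\<dots> > 0"
  proof (intro prod_pos ballI)
    fix j assume "j \<in> {..<i}"
    then have "j < D" using that by simp
    moreover have "q j \<ge> 0" using q_ge[of j] by simp
    ultimately show "(1 + \<alpha> * q j) / (\<beta> - \<alpha> * q j) > 0" using betapos ha2 by (simp add: add_pos_nonneg)
  qed
  finally show ?thesis .
qed

definition "G t i = (-1) ^ i * Vf t i"

lemma Gstar_pos: "i \<le> D \<Longrightarrow> G (- q D) i > 0"
proof -
  assume i: "i \<le> D"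
  have "G (- q D) i = Kf i * ((-1) ^ i * w i)" unfolding G_def using Vf_thD[OF i] by simp
  then show ?thesis using Kf_pos[OF i] w_sign[OF i] by simp
qed

lemma G_rec: "cc (Suc (Suc i)) * G t (Suc (Suc i)) = (aa (Suc i) - t) * G t (Suc i) - bb i * G t i"
proof -
  have "cc (Suc (Suc i)) > 0" using cc_pos by simp
  then show ?thesis unfolding G_def by (simp add: field_simps)
qed

lemma mono_claim:
  assumes t: "t < - q D"
  shows "i < D \<Longrightarrow> G t i > 0 \<and> G t (Suc i) * G (- q D) i > G (- q D) (Suc i) * G t i"
proof (induction i)
  case 0
  then show ?case using t by (simp add: G_def)
next
  case (Suc i)
  then have IH: "G t i > 0" "G t (Suc i) * G (- q D) i > G (- q D) (Suc i) * G t i" by auto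
  have s1: "G (- q D) i > 0" "G (- q D) (Suc i) > 0" "G (- q D) (Suc (Suc i)) > 0"
    using Gstar_pos Suc.prems by auto
  have p1: "G t (Suc i) > 0"
  proof -
    have "G (- q D) (Suc i) * G t i > 0" using s1 IH by simp
    then have "G t (Suc i) * G (- q D) i > 0" using IH by linarith
    then show ?thesis using s1 by (simp add: zero_less_mult_iff)
  qed
  have bpos: "bb i > 0" using bb_pos Suc.prems by simp
  have c2: "cc (Suc (Suc i)) > 0" using cc_pos by simp
  have r1: "cc (Suc (Suc i)) * G t (Suc (Suc i)) = (aa (Suc i) - t) * G t (Suc i) - bb i * G t i" by (rule G_rec)
  have r2: "cc (Suc (Suc i)) * G (- q D) (Suc (Suc i)) = (aa (Suc i) + q D) * G (- q D) (Suc i) - bb i * G (- q D) i"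
    using G_rec[of i "- q D"] by simp
  have "cc (Suc (Suc i)) * (G t (Suc (Suc i)) * G (- q D) (Suc i) - G (- q D) (Suc (Suc i)) * G t (Suc i))
     = (cc (Suc (Suc i)) * G t (Suc (Suc i))) * G (- q D) (Suc i) - (cc (Suc (Suc i)) * G (- q D) (Suc (Suc i))) * G t (Suc i)"
    by (simp add: algebra_simps)
  also have "\<dots> = ((aa (Suc i) - t) * G t (Suc i) - bb i * G t i) * G (- q D) (Suc i)
      - ((aa (Suc i) + q D) * G (- q D) (Suc i) - bb i * G (- q D) i) * G t (Suc i)"
    by (simp only: r1 r2)
  also have "\<dots> = (- q D - t) * G t (Suc i) * G (- q D) (Suc i) + bb i * (G (- q D) i * G t (Suc i) - G t i * G (- q D) (Suc i))"
    by (simp add: algebra_simps)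
  also have "\<dots> > 0"
  proof -
    have "(- q D - t) * G t (Suc i) * G (- q D) (Suc i) > 0" using t p1 s1 by simp
    moreover have "bb i * (G (- q D) i * G t (Suc i) - G t i * G (- q D) (Suc i)) > 0"
      using bpos IH(2) by (simp add: algebra_simps)
    ultimately show ?thesis by simp
  qed
  finally show ?case using p1 c2 by (simp add: zero_less_mult_iff)
qed

lemma FF_G: "FF t = - ((-1) ^ D * ((aa D - t) * G t D - bb (D - 1) * G t (D - 1)))"
proof -
  define j where "j = D - 1"
  have jD: "D = Suc j" using hD unfolding j_def by simp
  have s1: "(-1::real) ^ D * (-1) ^ D = 1" by (simp add: power_add[symmetric])
  have s2: "(-1::real) ^ D * (-1) ^ j = -1" unfolding jD by simp
  have "(-1) ^ D * ((aa D - t) * G t D - bb j * G t j)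
      = (aa D - t) * ((-1) ^ D * (-1) ^ D) * Vf t D - bb j * ((-1) ^ D * (-1) ^ j) * Vf t j"
    unfolding G_def by (simp add: algebra_simps)
  also have "\<dots> = (aa D - t) * Vf t D + bb j * Vf t j" unfolding s1 s2 by simp
  finally show ?thesis unfolding FF_def j_def by (simp add: algebra_simps)
qed

lemma FF_nonzero: "t < - q D \<Longrightarrow> FF t \<noteq> 0"
proof
  assume t: "t < - q D" and F0: "FF t = 0"
  define j where "j = D - 1"
  have jD: "Suc j = D" using hD unfolding j_def by simp
  have H0: "(aa D - t) * G t D - bb j * G t j = 0" using F0 FF_G[of t] by (simp add: j_def)
  have H1: "(aa D + q D) * G (- q D) D - bb j * G (- q D) j = 0" using FF_thD FF_G[of "- q D"] by (simp add: j_def)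
  have mc: "G t j > 0" "G t D * G (- q D) j > G (- q D) D * G t j" using mono_claim[OF t, of j] jD by auto
  have s: "G (- q D) j > 0" "G (- q D) D > 0" using Gstar_pos jD by auto
  have GD: "G t D > 0"
  proof -
    have "G (- q D) D * G t j > 0" using s mc by simp
    then have "G t D * G (- q D) j > 0" using mc by linarith
    then show ?thesis using s by (simp add: zero_less_mult_iff)
  qed
  have bpos: "bb j > 0" using bb_pos jD by simp
  have "0 = ((aa D - t) * G t D - bb j * G t j) * G (- q D) D - ((aa D + q D) * G (- q D) D - bb j * G (- q D) j) * G t D"
    using H0 H1 by simp
  also have "\<dots> = (- q D - t) * G t D * G (- q D) D + bb j * (G (- q D) j * G t D - G t j * G (- q D) D)"
    by (simp add: algebra_simps)
  also have "\<dots> > 0"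
  proof -
    have "(- q D - t) * G t D * G (- q D) D > 0" using t GD s by simp
    moreover have "bb j * (G (- q D) j * G t D - G t j * G (- q D) D) > 0"
      using bpos mc(2) by (simp add: algebra_simps)
    ultimately show ?thesis by simp
  qed
  finally show False by simp
qed

fun Vp :: "nat \<Rightarrow> real poly" where
  "Vp 0 = 1"
| "Vp (Suc 0) = [:0, 1:]"
| "Vp (Suc (Suc i)) = smult (1 / cc (Suc (Suc i))) ([:- aa (Suc i), 1:] * Vp (Suc i) - smult (bb i) (Vp i))"

lemma poly_Vp: "poly (Vp i) t = Vf t i"
  by (induction i rule: Vp.induct) (auto simp: field_simps)

lemma Vp_coeff: "coeff (Vp i) i > 0 \<and> (\<forall>n>i. coeff (Vp i) n = 0)"
proof (induction i rule: Vp.induct)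
  case 1 then show ?case by simp
next
  case 2 then show ?case by (auto simp: coeff_pCons split: nat.splits)
next
  case (3 i)
  have c2: "cc (Suc (Suc i)) > 0" using cc_pos by simp
  have ex: "[:- aa (Suc i), 1:] * p = smult (- aa (Suc i)) p + pCons 0 p" for p :: "real poly"
    by simp
  show ?case
  proof (intro conjI allI impI)
    show "coeff (Vp (Suc (Suc i))) (Suc (Suc i)) > 0"
      using 3 c2 by (simp add: ex)
  next
    fix n assume "n > Suc (Suc i)"
    then obtain m where m: "n = Suc m" "m > Suc i" by (cases n) auto
    then show "coeff (Vp (Suc (Suc i))) n = 0" using 3 by (simp add: ex)
  qed
qed

definition "Fp = [:- aa D, 1:] * Vp D - smult (bb (D - 1)) (Vp (D - 1))"

lemma poly_Fp: "poly Fp t = FF t"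
  unfolding Fp_def FF_def by (simp add: poly_Vp algebra_simps)

lemma Fp_nz: "Fp \<noteq> 0"
proof -
  have ex: "[:- aa D, 1:] * p = smult (- aa D) p + pCons 0 p" for p :: "real poly" by simp
  have "coeff Fp (Suc D) = coeff (Vp D) D"
    using Vp_coeff[of D] Vp_coeff[of "D - 1"] hD unfolding Fp_def by (simp add: ex)
  then have "coeff Fp (Suc D) > 0" using Vp_coeff[of D] by simp
  then show ?thesis by auto
qed

lemma FF_roots_finite: "finite {t. FF t = 0}"
  using poly_roots_finite[OF Fp_nz] by (simp add: poly_Fp)

end


context setting begin

definition "Nf j i = (if i = Suc j then bb j else if Suc i = j then cc j else if i = j then aa j else 0)"

lemma nbr_count:
  assumes x: "x \<in> V" and z: "z \<in> V"
  shows "real (card {y\<in>V. adj z y \<and> d x y = i}) = Nf (d x z) i"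
proof -
  define j where "j = d x z"
  have range: "d x y = j - 1 \<and> 1 \<le> j \<or> d x y = j \<or> d x y = Suc j" if "adj z y" for y
  proof -
    have "d x y \<le> d x z + 1" using d_adj[OF x that] .
    moreover have "d x z \<le> d x y + 1" using d_adj[OF x adj_sym[OF that]] .
    ultimately show ?thesis unfolding j_def by linarith
  qed
  show ?thesis
  proof (cases "i = Suc j")
    case True
    then show ?thesis using bcond[OF x z] by (simp add: Nf_def j_def)
  next
    case F1: False
    show ?thesis
    proof (cases "Suc i = j")
      case True
      then have "1 \<le> d x z" "i = d x z - 1" unfolding j_def by auto
      then show ?thesis using ccond[OF x z] True F1 by (simp add: Nf_def j_def)
    next
      case F2: False
      show ?thesis
      proof (cases "i = j")
        case True
        show ?thesis
        proof (cases "j = 0")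
          case True
          then have "z = x" using d0_iff[OF x z] unfolding j_def by simp
          then have "{y\<in>V. adj z y \<and> d x y = i} = {}" using d0_iff[OF x] adj_irr \<open>i = j\<close> True by auto
          then have "card {y\<in>V. adj z y \<and> d x y = i} = 0" by (simp only: card.empty)
          moreover have "Nf (d x z) i = 0" using True \<open>i = j\<close> unfolding j_def by (simp add: Nf_def aa0)
          ultimately show ?thesis by simp
        next
          case False
          let ?SA = "{y\<in>V. adj z y}"
          let ?Sm = "{y\<in>V. adj z y \<and> d x y = j - 1}"
          let ?S0 = "{y\<in>V. adj z y \<and> d x y = j}"
          let ?Sp = "{y\<in>V. adj z y \<and> d x y = Suc j}"
          have un: "?SA = ?Sm \<union> ?S0 \<union> ?Sp"
          proof
            show "?SA \<subseteq> ?Sm \<union> ?S0 \<union> ?Sp"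
            proof
              fix y assume "y \<in> ?SA"
              then have y: "adj z y" "y \<in> V" by auto
              from range[OF y(1)] show "y \<in> ?Sm \<union> ?S0 \<union> ?Sp" using y by auto
            qed
            show "?Sm \<union> ?S0 \<union> ?Sp \<subseteq> ?SA" by blast
          qed
          have fin: "finite ?Sm" "finite ?S0" "finite ?Sp" using finV by auto
          have d1: "?Sm \<inter> ?S0 = {}" using False by auto
          have d2: "(?Sm \<union> ?S0) \<inter> ?Sp = {}" by auto
          have "card ?SA = card (?Sm \<union> ?S0) + card ?Sp"
            unfolding un using fin d2 by (simp add: card_Un_disjoint)
          also have "card (?Sm \<union> ?S0) = card ?Sm + card ?S0" using fin d1 by (simp add: card_Un_disjoint)
          finally have "card ?SA = card ?Sm + card ?S0 + card ?Sp" .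
          then have "real (card ?SA) = real (card ?Sm) + real (card ?S0) + real (card ?Sp)" by simp
          moreover have "real (card ?SA) = kk" using degree[OF z] .
          moreover have "real (card ?Sm) = cc j" using ccond[OF x z] False unfolding j_def by simp
          moreover have "real (card ?Sp) = bb j" using bcond[OF x z] unfolding j_def by simp
          ultimately have "real (card ?S0) = aa j" unfolding aa_def by simp
          then show ?thesis using \<open>i = j\<close> F1 F2 by (simp add: Nf_def j_def)
        qed
      next
        case F3: False
        have "{y\<in>V. adj z y \<and> d x y = i} = {}"
        proof (rule ccontr)
          assume "{y\<in>V. adj z y \<and> d x y = i} \<noteq> {}"
          then obtain y where "adj z y" "d x y = i" by auto
          then show False using range F1 F2 F3 by fastforce
        qed
        then have "card {y\<in>V. adj z y \<and> d x y = i} = 0" by (simp only: card.empty)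
        then show ?thesis using F1 F2 F3 by (simp add: Nf_def j_def)
      qed
    qed
  qed
qed

lemma sum_if_const: "finite S \<Longrightarrow> (\<Sum>z\<in>S. if P z then c else 0) = real (card {z\<in>S. P z}) * (c::real)"
proof -
  assume "finite S"
  have "(\<Sum>z\<in>S. if P z then c else 0) = (\<Sum>z\<in>S \<inter> {z. P z}. c) + (\<Sum>z\<in>S \<inter> - {z. P z}. 0)"
    by (rule sum.If_cases) (rule \<open>finite S\<close>)
  also have "S \<inter> {z. P z} = {z\<in>S. P z}" by auto
  finally show ?thesis by simp
qed

lemma sum_if_filter: "finite S \<Longrightarrow> (\<Sum>z\<in>S. if P z then (e::real) * f z else 0) = e * (\<Sum>z\<in>{z\<in>S. P z}. f z)"
proof -
  assume "finite S"
  have "(\<Sum>z\<in>S. if P z then e * f z else 0) = (\<Sum>z\<in>S \<inter> {z. P z}. e * f z) + (\<Sum>z\<in>S \<inter> - {z. P z}. 0)"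
    by (rule sum.If_cases) (rule \<open>finite S\<close>)
  also have "S \<inter> {z. P z} = {z\<in>S. P z}" by auto
  finally show ?thesis by (simp add: sum_distrib_left)
qed

lemma nbr_sum:
  assumes x: "x \<in> V" and y: "y \<in> V"
  shows "(\<Sum>z\<in>V. if adj y z then g (d x z) else 0) =
    bb (d x y) * g (Suc (d x y)) + cc (d x y) * g (d x y - 1) + aa (d x y) * (g (d x y) :: real)"
proof -
  define j where "j = d x y"
  have jD: "j \<le> D" using diam[OF x y] unfolding j_def .
  have "(\<Sum>z\<in>V. if adj y z then g (d x z) else 0)
      = (\<Sum>i\<in>{..Suc D}. \<Sum>z\<in>{z\<in>V. d x z = i}. if adj y z then g (d x z) else 0)"
  proof -
    have img: "d x ` V \<subseteq> {..Suc D}" using diam[OF x] by (auto intro: le_SucI)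
    show ?thesis by (rule sum.group[symmetric, OF finV finite_atMost img])
  qed
  also have "\<dots> = (\<Sum>i\<in>{..Suc D}. Nf j i * g i)"
  proof (rule sum.cong[OF refl])
    fix i
    have "(\<Sum>z\<in>{z\<in>V. d x z = i}. if adj y z then g (d x z) else 0)
        = (\<Sum>z\<in>{z\<in>V. d x z = i}. if adj y z then g i else 0)"
      by (rule sum.cong) auto
    also have "\<dots> = real (card {z\<in>{z\<in>V. d x z = i}. adj y z}) * g i"
      using finV by (simp add: sum_if_const)
    also have "{z\<in>{z\<in>V. d x z = i}. adj y z} = {z\<in>V. adj y z \<and> d x z = i}" by auto
    finally show "(\<Sum>z\<in>{z\<in>V. d x z = i}. if adj y z then g (d x z) else 0) = Nf j i * g i"
      using nbr_count[OF x y] unfolding j_def by simp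
  qed
  also have "\<dots> = (\<Sum>i\<in>{..Suc D}. (if i = Suc j then bb j * g i else 0)
      + (if i = j - 1 then (if j = 0 then 0 else cc j * g i) else 0) + (if i = j then aa j * g i else 0))"
    by (rule sum.cong[OF refl]) (auto simp: Nf_def cc0)
  also have "\<dots> = bb j * g (Suc j) + cc j * g (j - 1) + aa j * g j"
  proof -
    have "j - 1 \<le> D" using jD by simp
    then show ?thesis using jD by (simp add: sum.distrib cc0 le_SucI)
  qed
  finally show ?thesis unfolding j_def .
qed

lemma eigvec:
  assumes x: "x \<in> V" and y: "y \<in> V"
  shows "(\<Sum>z\<in>V. if adj y z then w (d x z) else 0) = - q D * w (d x y)"
proof -
  have "d x y \<le> D" using diam[OF x y] .
  then show ?thesis unfolding nbr_sum[OF x y] using Eig[of "d x y"] by (simp add: algebra_simps)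
qed

lemma spherical:
  assumes x: "x \<in> V" and eig: "\<forall>y\<in>V. (\<Sum>z\<in>V. if adj y z then f z else 0) = t * f y"
  defines "u \<equiv> \<lambda>i. (\<Sum>y\<in>{y\<in>V. d x y = i}. f y)"
  shows "t * u i = (if 1 \<le> i then bb (i - 1) * u (i - 1) else 0) + cc (Suc i) * u (Suc i) + aa i * u i"
proof -
  have "t * u i = (\<Sum>y\<in>{y\<in>V. d x y = i}. t * f y)" unfolding u_def by (simp add: sum_distrib_left)
  also have "\<dots> = (\<Sum>y\<in>{y\<in>V. d x y = i}. \<Sum>z\<in>V. if adj y z then f z else 0)"
    using eig by (intro sum.cong) auto
  also have "\<dots> = (\<Sum>z\<in>V. \<Sum>y\<in>{y\<in>V. d x y = i}. if adj y z then f z else 0)" by (rule sum.swap)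
  also have "\<dots> = (\<Sum>z\<in>V. f z * Nf (d x z) i)"
  proof (rule sum.cong[OF refl])
    fix z assume z: "z \<in> V"
    have "(\<Sum>y\<in>{y\<in>V. d x y = i}. if adj y z then f z else 0) = real (card {y\<in>{y\<in>V. d x y = i}. adj y z}) * f z"
      using finV by (simp add: sum_if_const)
    also have "{y\<in>{y\<in>V. d x y = i}. adj y z} = {y\<in>V. adj z y \<and> d x y = i}" using adj_sym by auto
    finally show "(\<Sum>y\<in>{y\<in>V. d x y = i}. if adj y z then f z else 0) = f z * Nf (d x z) i"
      using nbr_count[OF x z] by simp
  qed
  also have "\<dots> = (\<Sum>z\<in>V. (if 1 \<le> i then (if d x z = i - 1 then bb (i - 1) * f z else 0) else 0)
      + (if d x z = Suc i then cc (Suc i) * f z else 0) + (if d x z = i then aa i * f z else 0))"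
    by (rule sum.cong[OF refl]) (auto simp: Nf_def)
  also have "\<dots> = (\<Sum>z\<in>V. (if 1 \<le> i then (if d x z = i - 1 then bb (i - 1) * f z else 0) else 0))
      + (\<Sum>z\<in>V. (if d x z = Suc i then cc (Suc i) * f z else 0)) + (\<Sum>z\<in>V. (if d x z = i then aa i * f z else 0))"
    by (simp add: sum.distrib)
  also have "\<dots> = (if 1 \<le> i then bb (i - 1) * u (i - 1) else 0) + cc (Suc i) * u (Suc i) + aa i * u i"
    unfolding u_def using finV by (simp add: sum_if_filter)
  finally show ?thesis .
qed

end


context setting begin

lemma cc1s[simp]: "cc (Suc 0) = 1" using cc1 by simp

lemma eig_FF: assumes "t \<in> adj_eigenvalues V adj" shows "FF t = 0"
proof -
  obtain f where f: "\<exists>v\<in>V. f v \<noteq> 0" "\<forall>x\<in>V. (\<Sum>y\<in>V. if adj x y then f y else 0) = t * f x"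
    using assms unfolding adj_eigenvalues_def by auto
  then obtain x where x: "x \<in> V" "f x \<noteq> 0" by auto
  define u where "u = (\<lambda>i. (\<Sum>y\<in>{y\<in>V. d x y = i}. f y))"
  have sph: "t * u i = (if 1 \<le> i then bb (i - 1) * u (i - 1) else 0) + cc (Suc i) * u (Suc i) + aa i * u i" for i
    unfolding u_def by (rule spherical[OF x(1) f(2)])
  have u0: "u 0 = f x"
  proof -
    have "{y\<in>V. d x y = 0} = {x}" using d0_iff[OF x(1)] x(1) by auto
    then show ?thesis unfolding u_def by simp
  qed
  have uD: "u (Suc D) = 0"
  proof -
    have e: "{y\<in>V. d x y = Suc D} = {}" using diam[OF x(1)] by fastforce
    show ?thesis unfolding u_def e by simp
  qed
  have ind: "Suc i \<le> D \<longrightarrow> u i = Vf t i * u 0 \<and> u (Suc i) = Vf t (Suc i) * u 0" for i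
  proof (induction i)
    case 0
    have "t * u 0 = cc 1 * u 1 + aa 0 * u 0" using sph[of 0] by simp
    then show ?case by (simp add: cc1 aa0)
  next
    case (Suc i)
    show ?case
    proof
      assume h: "Suc (Suc i) \<le> D"
      then have IH: "u i = Vf t i * u 0" "u (Suc i) = Vf t (Suc i) * u 0" using Suc by auto
      have c2: "cc (Suc (Suc i)) > 0" using cc_pos by simp
      have "t * u (Suc i) = bb i * u i + cc (Suc (Suc i)) * u (Suc (Suc i)) + aa (Suc i) * u (Suc i)"
        using sph[of "Suc i"] by simp
      then have "u (Suc (Suc i)) = ((t - aa (Suc i)) * u (Suc i) - bb i * u i) / cc (Suc (Suc i))"
        using c2 by (simp add: field_simps)
      then have "u (Suc (Suc i)) = Vf t (Suc (Suc i)) * u 0"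
        using IH by (simp add: field_simps)
      then show "u (Suc i) = Vf t (Suc i) * u 0 \<and> u (Suc (Suc i)) = Vf t (Suc (Suc i)) * u 0"
        using IH by simp
    qed
  qed
  define j where "j = D - 1"
  have jD: "Suc j = D" using hD unfolding j_def by simp
  have uj: "u j = Vf t j * u 0" "u D = Vf t D * u 0" using ind[of j] jD by auto
  have "t * u D = bb j * u j + aa D * u D"
    using sph[of D] uD hD by (simp add: j_def)
  then have "FF t * u 0 = 0" unfolding FF_def j_def[symmetric] using uj by (simp add: algebra_simps)
  then show ?thesis using u0 x(2) by simp
qed

lemma thD_in: "- q D \<in> adj_eigenvalues V adj"
proof -
  obtain x0 where x0: "x0 \<in> V" using Vne by auto
  show ?thesis unfolding adj_eigenvalues_def
  proof (intro CollectI exI[of _ "\<lambda>y. w (d x0 y)"] conjI)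
    show "\<exists>v\<in>V. w (d x0 v) \<noteq> 0" using x0 d0[OF x0] by (intro bexI[of _ x0]) auto
    show "\<forall>x\<in>V. (\<Sum>y\<in>V. if adj x y then w (d x0 y) else 0) = - q D * w (d x0 x)"
      using eigvec[OF x0] by auto
  qed
qed

lemma theta_min_val: "theta_min V adj = - q D"
  unfolding theta_min_def
proof (rule Min_eqI)
  show "finite (adj_eigenvalues V adj)"
    by (rule finite_subset[OF _ FF_roots_finite]) (auto dest: eig_FF)
  show "- q D \<le> t" if "t \<in> adj_eigenvalues V adj" for t
    using eig_FF[OF that] FF_nonzero[of t] by force
  show "- q D \<in> adj_eigenvalues V adj" by (rule thD_in)
qed

lemma valency_val: "real (valency V adj) = kk"
proof -
  have "(SOME x. x \<in> V) \<in> V" using Vne by (simp add: some_in_eq)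
  then show ?thesis unfolding valency_def using degree by simp
qed

lemma line_card: "C \<in> CC \<Longrightarrow> real (card C) = \<beta> + 1"
proof -
  assume "C \<in> CC"
  then have "delsarte_clique V adj C" using geom by (simp add: geometric_def)
  then have "real (card C) = 1 + kk / q D"
    unfolding delsarte_clique_def theta_min_val valency_val by simp
  also have "kk / q D = \<beta>" using qD_ge by (simp add: kk_def)
  finally show ?thesis by simp
qed

lemma line_clique: "C \<in> CC \<Longrightarrow> is_clique V adj C"
  using geom by (simp add: geometric_def delsarte_clique_def)
lemma line_sub: "C \<in> CC \<Longrightarrow> C \<subseteq> V" using line_clique by (simp add: is_clique_def)
lemma line_adj: "C \<in> CC \<Longrightarrow> u \<in> C \<Longrightarrow> v \<in> C \<Longrightarrow> u \<noteq> v \<Longrightarrow> adj u v"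
  using line_clique by (simp add: is_clique_def)
lemma line_ex: "adj x y \<Longrightarrow> \<exists>C. C \<in> CC \<and> x \<in> C \<and> y \<in> C"
proof -
  assume a: "adj x y"
  have "\<exists>!C. C \<in> CC \<and> x \<in> C \<and> y \<in> C" using geom a by (simp add: geometric_def)
  then show ?thesis by blast
qed
lemma line_uniq: "adj x y \<Longrightarrow> C \<in> CC \<Longrightarrow> x \<in> C \<Longrightarrow> y \<in> C \<Longrightarrow> C' \<in> CC \<Longrightarrow> x \<in> C' \<Longrightarrow> y \<in> C' \<Longrightarrow> C = C'"
  using geom unfolding geometric_def by blast
lemma line_through: "adj x y \<Longrightarrow> line_through CC x y \<in> CC \<and> x \<in> line_through CC x y \<and> y \<in> line_through CC x y"
proof -
  assume a: "adj x y"
  have "\<exists>!C. C \<in> CC \<and> x \<in> C \<and> y \<in> C" using geom a by (simp add: geometric_def)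
  then show ?thesis unfolding line_through_def by (rule theI')
qed
lemma line_through_eq: "adj x y \<Longrightarrow> C \<in> CC \<Longrightarrow> x \<in> C \<Longrightarrow> y \<in> C \<Longrightarrow> line_through CC x y = C"
proof -
  assume a: "adj x y" and c: "C \<in> CC" "x \<in> C" "y \<in> C"
  have lt: "line_through CC x y \<in> CC" "x \<in> line_through CC x y" "y \<in> line_through CC x y"
    using line_through[OF a] by auto
  show ?thesis using line_uniq[OF a c lt] by simp
qed

lemma finCC: "finite CC"
proof -
  have "CC \<subseteq> Pow V" using line_sub by auto
  moreover have "finite (Pow V)" using finV by simp
  ultimately show ?thesis by (rule finite_subset)
qed

lemma lines_count: assumes x: "x \<in> V" shows "real (card {L\<in>CC. x \<in> L}) = q D"
proof -
  let ?Lx = "{L\<in>CC. x \<in> L}"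
  have un: "{y\<in>V. adj x y} = (\<Union>L\<in>?Lx. L - {x})"
  proof
    show "{y\<in>V. adj x y} \<subseteq> (\<Union>L\<in>?Lx. L - {x})"
    proof
      fix y assume "y \<in> {y\<in>V. adj x y}"
      then have "adj x y" by simp
      then obtain C where "C \<in> CC" "x \<in> C" "y \<in> C" using line_ex by blast
      moreover have "y \<noteq> x" using \<open>adj x y\<close> adj_irr by auto
      ultimately show "y \<in> (\<Union>L\<in>?Lx. L - {x})" by auto
    qed
    show "(\<Union>L\<in>?Lx. L - {x}) \<subseteq> {y\<in>V. adj x y}"
    proof
      fix y assume "y \<in> (\<Union>L\<in>?Lx. L - {x})"
      then obtain L where L: "L \<in> CC" "x \<in> L" "y \<in> L" "y \<noteq> x" by auto
      then have "adj x y" using line_adj by metis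
      moreover have "y \<in> V" using L line_sub by auto
      ultimately show "y \<in> {y\<in>V. adj x y}" by simp
    qed
  qed
  have finLx: "finite ?Lx" using finCC by simp
  have "card {y\<in>V. adj x y} = (\<Sum>L\<in>?Lx. card (L - {x}))"
    unfolding un
  proof (rule card_UN_disjoint[OF finLx])
    show "\<forall>L\<in>?Lx. finite (L - {x})"
    proof
      fix L assume "L \<in> ?Lx"
      then have "L \<subseteq> V" using line_sub by auto
      then show "finite (L - {x})" using finV by (simp add: finite_subset)
    qed
    show "\<forall>L\<in>?Lx. \<forall>L'\<in>?Lx. L \<noteq> L' \<longrightarrow> (L - {x}) \<inter> (L' - {x}) = {}"
    proof (intro ballI impI)
      fix L L' assume L: "L \<in> ?Lx" "L' \<in> ?Lx" "L \<noteq> L'"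
      show "(L - {x}) \<inter> (L' - {x}) = {}"
      proof (rule ccontr)
        assume "(L - {x}) \<inter> (L' - {x}) \<noteq> {}"
        then obtain y where y: "y \<in> L" "y \<in> L'" "y \<noteq> x" by auto
        then have "adj x y" using L line_adj by auto
        then show False using line_uniq L y by blast
      qed
    qed
  qed
  then have "real (card {y\<in>V. adj x y}) = (\<Sum>L\<in>?Lx. real (card (L - {x})))" by simp
  also have "\<dots> = (\<Sum>L\<in>?Lx. \<beta>)"
  proof (rule sum.cong[OF refl])
    fix L assume L: "L \<in> ?Lx"
    have "L \<subseteq> V" using L line_sub by auto
    then have fL: "finite L" using finV by (simp add: finite_subset)
    have "x \<in> L" using L by simp
    then have "card (L - {x}) = card L - 1" using fL by (simp add: card_Diff_singleton)
    moreover have "card L \<noteq> 0" using \<open>x \<in> L\<close> fL by auto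
    then have "card L \<ge> 1" by simp
    ultimately show "real (card (L - {x})) = \<beta>" using line_card[of L] L by (simp add: of_nat_diff)
  qed
  finally have "kk = real (card ?Lx) * \<beta>" using degree[OF x] by simp
  then show ?thesis using beta_pos by (simp add: kk_def)
qed

end


context setting begin

lemma sum_restr: "L \<subseteq> V \<Longrightarrow> sum g L = (\<Sum>z\<in>V. if z \<in> L then g z else (0::real))"
proof -
  assume "L \<subseteq> V"
  then have "V \<inter> L = L" by auto
  then show ?thesis using sum.inter_restrict[OF finV, of g L] by simp
qed

lemma pair_count: assumes z: "z \<in> V" and z': "z' \<in> V"
  shows "real (card {L\<in>CC. z \<in> L \<and> z' \<in> L}) = (if z = z' then q D else if adj z z' then 1 else 0)"
proof (cases "z = z'")
  case True then show ?thesis using lines_count[OF z] by simp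
next
  case False
  show ?thesis
  proof (cases "adj z z'")
    case True
    have "{L\<in>CC. z \<in> L \<and> z' \<in> L} = {line_through CC z z'}"
      using line_through[OF True] line_through_eq[OF True] by auto
    then show ?thesis using True False by simp
  next
    case F2: False
    have "{L\<in>CC. z \<in> L \<and> z' \<in> L} = {}" using line_adj False F2 by blast
    then have "card {L\<in>CC. z \<in> L \<and> z' \<in> L} = 0" by (simp only: card.empty)
    then show ?thesis using False F2 by simp
  qed
qed

lemma line_sum0:
  assumes eig: "\<forall>y\<in>V. (\<Sum>z\<in>V. if adj y z then f z else 0) = - q D * f y"
  shows "\<forall>L\<in>CC. (\<Sum>z\<in>L. f z) = 0"
proof -
  have sq: "(\<Sum>z\<in>L. f z)\<^sup>2 = (\<Sum>z\<in>V. \<Sum>z'\<in>V. if z \<in> L \<and> z' \<in> L then f z * f z' else 0)" if L: "L \<in> CC" for L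
  proof -
    have LV: "L \<subseteq> V" using line_sub L by simp
    have "(\<Sum>z\<in>L. f z)\<^sup>2 = (\<Sum>z\<in>L. \<Sum>z'\<in>L. f z * f z')"
      by (simp add: power2_eq_square sum_product)
    also have "\<dots> = (\<Sum>z\<in>V. if z \<in> L then (\<Sum>z'\<in>V. if z' \<in> L then f z * f z' else 0) else 0)"
      using sum_restr[OF LV] by simp
    also have "\<dots> = (\<Sum>z\<in>V. \<Sum>z'\<in>V. if z \<in> L \<and> z' \<in> L then f z * f z' else 0)"
      by (rule sum.cong[OF refl]) auto
    finally show ?thesis .
  qed
  have "(\<Sum>L\<in>CC. (\<Sum>z\<in>L. f z)\<^sup>2) = (\<Sum>L\<in>CC. \<Sum>z\<in>V. \<Sum>z'\<in>V. if z \<in> L \<and> z' \<in> L then f z * f z' else 0)"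
    using sq by simp
  also have "\<dots> = (\<Sum>z\<in>V. \<Sum>L\<in>CC. \<Sum>z'\<in>V. if z \<in> L \<and> z' \<in> L then f z * f z' else 0)"
    by (rule sum.swap)
  also have "\<dots> = (\<Sum>z\<in>V. \<Sum>z'\<in>V. \<Sum>L\<in>CC. if z \<in> L \<and> z' \<in> L then f z * f z' else 0)"
    by (rule sum.cong[OF refl], rule sum.swap)
  also have "\<dots> = (\<Sum>z\<in>V. \<Sum>z'\<in>V. (if z' = z then q D * (f z * f z) else 0) + (if adj z z' then f z * f z' else 0))"
  proof (rule sum.cong[OF refl], rule sum.cong[OF refl])
    fix z z' assume z: "z \<in> V" and z': "z' \<in> V"
    have "(\<Sum>L\<in>CC. if z \<in> L \<and> z' \<in> L then f z * f z' else 0) = real (card {L\<in>CC. z \<in> L \<and> z' \<in> L}) * (f z * f z')"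
      using finCC by (rule sum_if_const)
    also have "\<dots> = (if z' = z then q D * (f z * f z) else 0) + (if adj z z' then f z * f z' else 0)"
      unfolding pair_count[OF z z'] using adj_irr by auto
    finally show "(\<Sum>L\<in>CC. if z \<in> L \<and> z' \<in> L then f z * f z' else 0) = (if z' = z then q D * (f z * f z) else 0) + (if adj z z' then f z * f z' else 0)" .
  qed
  also have "\<dots> = (\<Sum>z\<in>V. q D * (f z * f z) + f z * (\<Sum>z'\<in>V. if adj z z' then f z' else 0))"
  proof (rule sum.cong[OF refl])
    fix z assume z: "z \<in> V"
    have "(\<Sum>z'\<in>V. if adj z z' then f z * f z' else 0) = f z * (\<Sum>z'\<in>V. if adj z z' then f z' else 0)"
      unfolding sum_distrib_left by (rule sum.cong) auto
    then show "(\<Sum>z'\<in>V. (if z' = z then q D * (f z * f z) else 0) + (if adj z z' then f z * f z' else 0))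
        = q D * (f z * f z) + f z * (\<Sum>z'\<in>V. if adj z z' then f z' else 0)"
      using z finV by (simp add: sum.distrib)
  qed
  also have "\<dots> = 0" using eig by (simp add: algebra_simps)
  finally have tot: "(\<Sum>L\<in>CC. (\<Sum>z\<in>L. f z)\<^sup>2) = 0" .
  have "\<forall>L\<in>CC. (\<Sum>z\<in>L. f z)\<^sup>2 = 0"
    using iffD1[OF sum_nonneg_eq_0_iff[OF finCC] tot] by simp
  then show ?thesis by simp
qed

lemma star:
  assumes L: "L \<in> CC" "x \<in> L" and xy: "adj x y" and yL: "y \<notin> L"
  shows "real (card {z\<in>L. adj y z}) = \<alpha> + 1"
proof -
  have y: "y \<in> V" using adjV xy by simp
  have "\<forall>y'\<in>V. (\<Sum>z\<in>V. if adj y' z then w (d y z) else 0) = - q D * w (d y y')"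
    using eigvec[OF y] by simp
  then have s0: "(\<Sum>z\<in>L. w (d y z)) = 0" using line_sum0[of "\<lambda>z. w (d y z)"] L by blast
  have LV: "L \<subseteq> V" using line_sub L by simp
  have fL: "finite L" using LV finV finite_subset by blast
  have dv: "w (d y z) = (if adj y z then w 1 else w 2)" if z: "z \<in> L" for z
  proof (cases "adj y z")
    case True
    have "z \<in> V" using LV z by auto
    then have "d y z = 1" using d1_iff[OF y] True by simp
    then show ?thesis using True by simp
  next
    case False
    have zV: "z \<in> V" using z LV by auto
    have "z \<noteq> x" using False adj_sym[OF xy] by auto
    then have xz: "adj x z" using line_adj L z by auto
    have "d y z \<le> 2" using d2[OF adj_sym[OF xy] xz] .
    moreover have "d y z \<noteq> 0" using d0_iff[OF y zV] yL z by auto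
    moreover have "d y z \<noteq> 1" using d1_iff[OF y zV] False by auto
    ultimately have "d y z = 2" by simp
    then show ?thesis using False by simp
  qed
  let ?n = "real (card {z\<in>L. adj y z})"
  let ?m = "real (card {z\<in>L. \<not> adj y z})"
  have "(\<Sum>z\<in>L. w (d y z)) = (\<Sum>z\<in>L. (if adj y z then w 1 else 0) + (if \<not> adj y z then w 2 else 0))"
    using dv by (intro sum.cong) auto
  also have "\<dots> = ?n * w 1 + ?m * w 2" using fL by (simp add: sum.distrib sum_if_const)
  finally have e1: "?n * w 1 + ?m * w 2 = 0" using s0 by simp
  have "card L = card {z\<in>L. adj y z} + card {z\<in>L. \<not> adj y z}"
  proof -
    have "L = {z\<in>L. adj y z} \<union> {z\<in>L. \<not> adj y z}" by auto
    moreover have "{z\<in>L. adj y z} \<inter> {z\<in>L. \<not> adj y z} = {}" by auto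
    ultimately show ?thesis using fL by (metis (no_types, lifting) card_Un_disjoint finite_Un)
  qed
  then have e2: "?n + ?m = \<beta> + 1" using line_card[OF L(1)] by simp
  have w1: "w 1 = - 1 / \<beta>" by (simp add: w_def rr_def)
  have bp: "\<beta> > 0" "\<beta> - \<alpha> > 0" using beta_pos beta_gt by auto
  have w2: "w 2 = (1 + \<alpha>) / (\<beta> * (\<beta> - \<alpha>))"
  proof -
    have "w 2 = (- 1 / \<beta>) * (- (1 + \<alpha>) / (\<beta> - \<alpha>))" by (simp add: w_def rr_def numeral_2_eq_2)
    also have "\<dots> = (1 + \<alpha>) / (\<beta> * (\<beta> - \<alpha>))" using bp by (simp add: field_simps)
    finally show ?thesis .
  qed
  have "(?n * w 1 + ?m * w 2) * (\<beta> * (\<beta> - \<alpha>)) = - ?n * (\<beta> - \<alpha>) + ?m * (1 + \<alpha>)"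
    unfolding w1 w2 using bp by (simp add: field_simps)
  then have "- ?n * (\<beta> - \<alpha>) + ?m * (1 + \<alpha>) = 0" using e1 by simp
  moreover have m: "?m = \<beta> + 1 - ?n" using e2 by simp
  moreover have "(\<beta> + 1) * (1 + \<alpha> - ?n) = - ?n * (\<beta> - \<alpha>) + (\<beta> + 1 - ?n) * (1 + \<alpha>)"
    by (simp add: algebra_simps)
  ultimately have "(\<beta> + 1) * (1 + \<alpha> - ?n) = 0" by simp
  then show ?thesis using bp by simp
qed

end


context setting begin

definition "Nb x = {y\<in>V. adj x y}"
definition "lnx x y = line_through CC x y"
definition "PP x y = {z\<in>V. adj x z \<and> adj y z \<and> z \<notin> lnx x y}"
definition "Lx x = {L\<in>CC. x \<in> L}"

lemma ln1: "adj x y \<Longrightarrow> lnx x y \<in> CC \<and> x \<in> lnx x y \<and> y \<in> lnx x y"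
  unfolding lnx_def by (rule line_through)
lemma ln2: "adj x y \<Longrightarrow> L \<in> CC \<Longrightarrow> x \<in> L \<Longrightarrow> y \<in> L \<Longrightarrow> lnx x y = L"
  unfolding lnx_def by (rule line_through_eq)
lemma PP_clique: "adj x y \<Longrightarrow> u \<in> PP x y \<Longrightarrow> v \<in> PP x y \<Longrightarrow> u \<noteq> v \<Longrightarrow> adj u v"
  using pasch unfolding dual_pasch_def is_clique_def PP_def lnx_def by blast
lemma PP_adj: "u \<in> PP x y \<Longrightarrow> adj x u \<and> adj y u \<and> u \<in> V \<and> u \<notin> lnx x y"
  unfolding PP_def by auto

lemma PP_card: assumes xy: "adj x y" and L: "L \<in> CC" "x \<in> L" "L \<noteq> lnx x y"
  shows "real (card (PP x y \<inter> L)) = \<alpha>"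
proof -
  have yL: "y \<notin> L" using ln2[OF xy L(1,2)] L(3) by auto
  have st: "real (card {z\<in>L. adj y z}) = \<alpha> + 1" using star[OF L(1,2) xy yL] .
  have eq: "PP x y \<inter> L = {z\<in>L. adj y z} - {x}"
  proof
    show "PP x y \<inter> L \<subseteq> {z\<in>L. adj y z} - {x}" using PP_adj adj_irr by fastforce
    show "{z\<in>L. adj y z} - {x} \<subseteq> PP x y \<inter> L"
    proof
      fix z assume z: "z \<in> {z\<in>L. adj y z} - {x}"
      then have zL: "z \<in> L" "adj y z" "z \<noteq> x" by auto
      then have xz: "adj x z" using line_adj L by metis
      have "z \<notin> lnx x y"
      proof
        assume "z \<in> lnx x y"
        then have "lnx x y = L" using line_uniq[OF xz] ln1[OF xy] L zL by metis
        then show False using L(3) by simp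
      qed
      then show "z \<in> PP x y \<inter> L" using zL xz adjV unfolding PP_def by auto
    qed
  qed
  have "{z\<in>L. adj y z} \<subseteq> V" using line_sub[OF L(1)] by auto
  then have fin: "finite {z\<in>L. adj y z}" using finV by (rule finite_subset)
  have "x \<in> {z\<in>L. adj y z}" using L xy adj_sym by auto
  then have "card ({z\<in>L. adj y z} - {x}) = card {z\<in>L. adj y z} - 1" using fin by (simp add: card_Diff_singleton)
  moreover have "card {z\<in>L. adj y z} \<ge> 1" using \<open>x \<in> {z\<in>L. adj y z}\<close> fin
    by (metis One_nat_def Suc_leI card_gt_0_iff empty_iff)
  ultimately show ?thesis unfolding eq using st by (simp add: of_nat_diff)
qed

lemma alpha_nat: "\<exists>s::nat. real s = \<alpha>"
proof -
  obtain x where x: "x \<in> V" using Vne by auto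
  have "real (card {y\<in>V. adj x y}) = kk" using degree[OF x] .
  then have "card {y\<in>V. adj x y} \<noteq> 0" using kk_pos by auto
  then have "{y\<in>V. adj x y} \<noteq> {}" by (metis card.empty)
  then obtain y where xy: "adj x y" by auto
  have c: "real (card (Lx x)) = q D" using lines_count[OF x] unfolding Lx_def .
  have "\<exists>L\<in>Lx x. L \<noteq> lnx x y"
  proof (rule ccontr)
    assume "\<not> ?thesis"
    then have "Lx x \<subseteq> {lnx x y}" by auto
    then have "card (Lx x) \<le> card {lnx x y}" by (intro card_mono) auto
    then have "card (Lx x) \<le> 1" by simp
    then show False using c qD_ge by simp
  qed
  then obtain L where "L \<in> CC" "x \<in> L" "L \<noteq> lnx x y" unfolding Lx_def by auto
  then show ?thesis using PP_card[OF xy] by blast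
qed

lemma third_line: assumes x: "x \<in> V" shows "\<exists>L\<in>Lx x. L \<noteq> L1 \<and> L \<noteq> L2"
proof (rule ccontr)
  assume "\<not> ?thesis"
  then have "Lx x \<subseteq> {L1, L2}" by auto
  then have "card (Lx x) \<le> card {L1, L2}" by (intro card_mono) auto
  moreover have "card {L1, L2} \<le> 2" by (cases "L1 = L2") auto
  ultimately have "card (Lx x) \<le> 2" by simp
  then show False using lines_count[OF x] qD_ge unfolding Lx_def by simp
qed

lemma PP_ne: assumes xy: "adj x y" and L: "L \<in> CC" "x \<in> L" "L \<noteq> lnx x y" shows "PP x y \<inter> L \<noteq> {}"
proof
  assume "PP x y \<inter> L = {}"
  then have "real (card (PP x y \<inter> L)) = 0" by simp
  then show False using PP_card[OF xy L] ha2 by simp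
qed

lemma PP_ex: assumes xy: "adj x y" shows "\<exists>c. c \<in> PP x y"
proof -
  have x: "x \<in> V" using adjV xy by auto
  obtain L where "L \<in> Lx x" "L \<noteq> lnx x y" using third_line[OF x] by blast
  then show ?thesis using PP_ne[OF xy] unfolding Lx_def by blast
qed

lemma PP_sym: assumes xy: "adj x y" and c: "c \<in> PP x y" shows "y \<in> PP x c"
proof -
  have cc': "adj x c" "adj y c" "c \<in> V" "c \<notin> lnx x y" using PP_adj[OF c] by auto
  have "y \<notin> lnx x c"
  proof
    assume "y \<in> lnx x c"
    then have "lnx x y = lnx x c" using ln2[OF xy] ln1[OF cc'(1)] by metis
    then show False using ln1[OF cc'(1)] cc'(4) by simp
  qed
  then show ?thesis using xy cc' adjV adj_sym unfolding PP_def by auto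
qed

lemma lines_meet: "L \<in> CC \<Longrightarrow> L' \<in> CC \<Longrightarrow> x \<in> L \<Longrightarrow> x \<in> L' \<Longrightarrow> z \<in> L \<Longrightarrow> z \<in> L' \<Longrightarrow> z \<noteq> x \<Longrightarrow> L = L'"
  using line_adj line_uniq by metis

lemma lemX: assumes xy: "adj x y" and c: "c \<in> PP x y" and L: "L \<in> CC" "x \<in> L" "L \<noteq> lnx x y" "L \<noteq> lnx x c"
  shows "PP x c \<inter> L = PP x y \<inter> L"
proof -
  have xc: "adj x c" using PP_adj[OF c] by simp
  have sub: "PP x y \<inter> L \<subseteq> PP x c \<inter> L"
  proof
    fix v assume v: "v \<in> PP x y \<inter> L"
    have va: "adj x v" "v \<in> V" "v \<in> L" using PP_adj v by auto
    have "v \<noteq> c"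
    proof
      assume "v = c"
      then have "L = lnx x c" using ln2[OF xc L(1,2)] va by simp
      then show False using L(4) by simp
    qed
    then have "adj c v" using PP_clique[OF xy c] v by auto
    moreover have "v \<notin> lnx x c"
    proof
      assume "v \<in> lnx x c"
      then have "L = lnx x c" using lines_meet[OF L(1) _ L(2)] ln1[OF xc] va adj_irr by metis
      then show False using L(4) by simp
    qed
    ultimately show "v \<in> PP x c \<inter> L" using va unfolding PP_def by auto
  qed
  have fin: "finite (PP x c \<inter> L)" using line_sub[OF L(1)] finV finite_subset by auto
  have "card (PP x y \<inter> L) = card (PP x c \<inter> L)"
    using PP_card[OF xy L(1-3)] PP_card[OF xc L(1,2,4)] by simp
  then show ?thesis using card_subset_eq[OF fin sub] by simp
qed

definition "c0 x y = (SOME c. c \<in> PP x y)"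
definition "TT x y = PP x (c0 x y) \<inter> lnx x y"
definition "Row x y = PP x y \<union> TT x y"

lemma c0_in: "adj x y \<Longrightarrow> c0 x y \<in> PP x y"
  unfolding c0_def using PP_ex by (metis someI_ex)

lemma ln_of: "adj x c \<Longrightarrow> c \<notin> lnx x y \<Longrightarrow> lnx x c \<noteq> lnx x y"
  using ln1 by metis

lemma lemE: assumes xy: "adj x y" and c: "c \<in> PP x y" and c': "c' \<in> PP x y" and ne: "lnx x c \<noteq> lnx x c'"
  shows "PP x c \<inter> lnx x y = PP x c' \<inter> lnx x y"
proof -
  have xc: "adj x c" and xc': "adj x c'" using PP_adj c c' by auto
  have l1: "lnx x c' \<noteq> lnx x y" using ln_of[OF xc'] PP_adj[OF c'] by simp
  have l2: "lnx x c \<noteq> lnx x y" using ln_of[OF xc] PP_adj[OF c] by simp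
  have "c' \<in> PP x y \<inter> lnx x c'" using c' ln1[OF xc'] by simp
  also have "PP x y \<inter> lnx x c' = PP x c \<inter> lnx x c'"
    using lemX[OF xy c, of "lnx x c'"] ln1[OF xc'] l1 ne by auto
  finally have c'c: "c' \<in> PP x c" by simp
  show ?thesis using lemX[OF xc c'c, of "lnx x y"] ln1[OF xy] l2 l1 by auto
qed

lemma T_indep: assumes xy: "adj x y" and c: "c \<in> PP x y" shows "PP x c \<inter> lnx x y = TT x y"
proof -
  have c0: "c0 x y \<in> PP x y" by (rule c0_in[OF xy])
  show ?thesis
  proof (cases "lnx x c = lnx x (c0 x y)")
    case False
    then show ?thesis unfolding TT_def using lemE[OF xy c c0] by simp
  next
    case True
    have x: "x \<in> V" using adjV xy by simp
    have xc: "adj x c" using PP_adj c by auto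
    obtain L3 where L3: "L3 \<in> Lx x" "L3 \<noteq> lnx x y" "L3 \<noteq> lnx x c" using third_line[OF x] by blast
    then obtain dd where dd: "dd \<in> PP x y \<inter> L3" using PP_ne[OF xy] unfolding Lx_def by blast
    have xd: "adj x dd" using PP_adj dd by auto
    have ld: "lnx x dd = L3" using ln2[OF xd] L3 dd unfolding Lx_def by auto
    have "PP x c \<inter> lnx x y = PP x dd \<inter> lnx x y" using lemE[OF xy c] dd ld L3 by auto
    also have "\<dots> = PP x (c0 x y) \<inter> lnx x y" using lemE[OF xy c0] dd ld L3 True by auto
    finally show ?thesis unfolding TT_def .
  qed
qed

lemma y_in_TT: "adj x y \<Longrightarrow> y \<in> TT x y"
  unfolding TT_def using PP_sym c0_in ln1 by blast

lemma y_in_Row: "adj x y \<Longrightarrow> y \<in> Row x y"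
  unfolding Row_def using y_in_TT by blast

lemma TT_sub: "adj x y \<Longrightarrow> TT x y \<subseteq> lnx x y" unfolding TT_def by auto
lemma TT_PP: "adj x y \<Longrightarrow> TT x y \<subseteq> PP x (c0 x y)" unfolding TT_def by auto

lemma Row_Nb: "adj x y \<Longrightarrow> u \<in> Row x y \<Longrightarrow> adj x u"
  unfolding Row_def using TT_PP PP_adj by blast

lemma Row_clique: assumes xy: "adj x y" and u: "u \<in> Row x y" and v: "v \<in> Row x y" and uv: "u \<noteq> v"
  shows "adj u v"
proof -
  have T_as: "TT x y = PP x p \<inter> lnx x y" if "p \<in> PP x y" for p using T_indep[OF xy that] by simp
  consider "u \<in> PP x y" "v \<in> PP x y" | "u \<in> TT x y" "v \<in> TT x y" | "u \<in> TT x y" "v \<in> PP x y" | "u \<in> PP x y" "v \<in> TT x y"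
    using u v unfolding Row_def by blast
  then show ?thesis
  proof cases
    case 1 then show ?thesis using PP_clique[OF xy] uv by blast
  next
    case 2 then show ?thesis using TT_sub[OF xy] ln1[OF xy] line_adj uv by blast
  next
    case 3
    then have "u \<in> PP x v" using T_as by blast
    then show ?thesis using PP_adj adj_sym by blast
  next
    case 4
    then have "v \<in> PP x u" using T_as by blast
    then show ?thesis using PP_adj by blast
  qed
qed

lemma Row_P_sub: assumes xy: "adj x y" and c: "c \<in> PP x y" shows "Row x c \<subseteq> Row x y"
proof
  fix u assume u: "u \<in> Row x c"
  have x: "x \<in> V" using adjV xy by simp
  have xc: "adj x c" using PP_adj c by auto
  have lcy: "lnx x c \<noteq> lnx x y" using ln_of[OF xc] PP_adj[OF c] by simp
  show "u \<in> Row x y"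
  proof (cases "u \<in> TT x c")
    case True
    obtain L3 where L3: "L3 \<in> Lx x" "L3 \<noteq> lnx x y" "L3 \<noteq> lnx x c" using third_line[OF x] by blast
    then obtain dd where dd: "dd \<in> PP x c \<inter> L3" using PP_ne[OF xc] unfolding Lx_def by blast
    have "PP x c \<inter> L3 = PP x y \<inter> L3" using lemX[OF xy c] L3 unfolding Lx_def by auto
    then have ddy: "dd \<in> PP x y" using dd by auto
    have xd: "adj x dd" using PP_adj dd by auto
    have ld: "lnx x dd = L3" using ln2[OF xd] L3 dd unfolding Lx_def by auto
    have "TT x c = PP x dd \<inter> lnx x c" using T_indep[OF xc, of dd] dd by auto
    also have "\<dots> = PP x y \<inter> lnx x c" using lemX[OF xy ddy, of "lnx x c"] ln1[OF xc] lcy ld L3 by auto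
    finally show ?thesis using True unfolding Row_def by auto
  next
    case False
    then have uP: "u \<in> PP x c" using u unfolding Row_def by auto
    have xu: "adj x u" using PP_adj uP by auto
    show ?thesis
    proof (cases "lnx x u = lnx x y")
      case False
      have "lnx x u \<noteq> lnx x c" using ln_of[OF xu] PP_adj[OF uP] by simp
      then have "PP x c \<inter> lnx x u = PP x y \<inter> lnx x u" using lemX[OF xy c, of "lnx x u"] ln1[OF xu] False by auto
      then show ?thesis using uP ln1[OF xu] unfolding Row_def by auto
    next
      case True
      have "u \<in> PP x c \<inter> lnx x y" using uP ln1[OF xu] True by auto
      then show ?thesis using T_indep[OF xy c] unfolding Row_def by auto
    qed
  qed
qed

lemma Row_P: assumes xy: "adj x y" and c: "c \<in> PP x y" shows "Row x c = Row x y"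
proof
  show "Row x c \<subseteq> Row x y" by (rule Row_P_sub[OF xy c])
  have xc: "adj x c" using PP_adj c by auto
  show "Row x y \<subseteq> Row x c" by (rule Row_P_sub[OF xc PP_sym[OF xy c]])
qed

lemma Row_mem: assumes xy: "adj x y" and u: "u \<in> Row x y" shows "Row x u = Row x y"
proof (cases "u \<in> PP x y")
  case True then show ?thesis using Row_P[OF xy] by simp
next
  case False
  then have uT: "u \<in> TT x y" using u unfolding Row_def by auto
  have c0: "c0 x y \<in> PP x y" using c0_in[OF xy] .
  have xc: "adj x (c0 x y)" using PP_adj c0 by auto
  have "u \<in> PP x (c0 x y)" using uT TT_PP[OF xy] by auto
  then have "Row x u = Row x (c0 x y)" using Row_P[OF xc] by simp
  also have "\<dots> = Row x y" using Row_P[OF xy c0] .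
  finally show ?thesis .
qed

lemma adj_char: assumes xu: "adj x u" and xv: "adj x v"
  shows "adj u v \<longleftrightarrow> u \<noteq> v \<and> (lnx x u = lnx x v \<or> Row x u = Row x v)"
proof
  assume uv: "adj u v"
  have "u \<noteq> v" using uv adj_irr by auto
  moreover have "lnx x u = lnx x v \<or> Row x u = Row x v"
  proof (cases "lnx x u = lnx x v")
    case False
    have "v \<notin> lnx x u"
    proof
      assume "v \<in> lnx x u"
      then have "lnx x v = lnx x u" using ln2[OF xv] ln1[OF xu] by blast
      then show False using False by simp
    qed
    then have "v \<in> PP x u" using xv uv adjV unfolding PP_def by auto
    then show ?thesis using Row_P[OF xu] by simp
  qed simp
  ultimately show "u \<noteq> v \<and> (lnx x u = lnx x v \<or> Row x u = Row x v)" by simp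
next
  assume h: "u \<noteq> v \<and> (lnx x u = lnx x v \<or> Row x u = Row x v)"
  then consider "lnx x u = lnx x v" | "Row x u = Row x v" by blast
  then show "adj u v"
  proof cases
    case 1
    then show ?thesis using ln1[OF xu] ln1[OF xv] line_adj h by metis
  next
    case 2
    have "u \<in> Row x v" using y_in_Row[OF xu] 2 by simp
    moreover have "v \<in> Row x v" using y_in_Row[OF xv] .
    ultimately show ?thesis using Row_clique[OF xv] h by blast
  qed
qed

lemma Row_line_card: assumes xy: "adj x y" and L: "L \<in> CC" "x \<in> L"
  shows "real (card (Row x y \<inter> L)) = \<alpha>"
proof (cases "L = lnx x y")
  case False
  have "TT x y \<inter> L = {}"
  proof (rule ccontr)
    assume "TT x y \<inter> L \<noteq> {}"
    then obtain z where z: "z \<in> TT x y" "z \<in> L" by auto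
    have "adj x z" using z TT_PP[OF xy] PP_adj by blast
    then have "z \<noteq> x" using adj_irr by auto
    then have "L = lnx x y" using lines_meet[OF L(1) _ L(2)] ln1[OF xy] z TT_sub[OF xy] by blast
    then show False using False by simp
  qed
  then have "Row x y \<inter> L = PP x y \<inter> L" unfolding Row_def by auto
  then show ?thesis using PP_card[OF xy L False] by simp
next
  case True
  have "PP x y \<inter> lnx x y = {}" unfolding PP_def by auto
  then have "Row x y \<inter> L = TT x y" unfolding Row_def True using TT_sub[OF xy] by auto
  moreover have c0: "c0 x y \<in> PP x y" using c0_in[OF xy] .
  moreover have xc: "adj x (c0 x y)" using PP_adj c0 by auto
  moreover have "lnx x y \<noteq> lnx x (c0 x y)" using ln_of[OF xc] PP_adj[OF c0] by metis
  ultimately show ?thesis unfolding TT_def using PP_card[OF xc] ln1[OF xy] True by auto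
qed

end



lemma grid_iso_abs:
  fixes Dl :: "'a set" and adjD :: "'a \<Rightarrow> 'a \<Rightarrow> bool" and rho :: "'a \<Rightarrow> 'r" and kap :: "'a \<Rightarrow> 'c"
  assumes fin: "finite Dl"
    and adjc: "\<And>u v. u \<in> Dl \<Longrightarrow> v \<in> Dl \<Longrightarrow> adjD u v \<longleftrightarrow> u \<noteq> v \<and> (rho u = rho v \<or> kap u = kap v)"
    and cell: "\<And>u v. u \<in> Dl \<Longrightarrow> v \<in> Dl \<Longrightarrow> card {w\<in>Dl. rho w = rho u \<and> kap w = kap v} = s"
  shows "graph_iso Dl adjD (cext_vertices s (grid_vertices (card (rho ` Dl)) (card (kap ` Dl)))) (cext_adj grid_adj)"
proof -
  let ?m = "card (rho ` Dl)" and ?n = "card (kap ` Dl)"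
  obtain er where er: "bij_betw er (rho ` Dl) {0..<?m}" using ex_bij_betw_finite_nat fin by blast
  obtain ek where ek: "bij_betw ek (kap ` Dl) {0..<?n}" using ex_bij_betw_finite_nat fin by blast
  define C where "C = (\<lambda>a c. {w\<in>Dl. rho w = a \<and> kap w = c})"
  define ec where "ec = (\<lambda>a c. SOME h. bij_betw h (C a c) {0..<s})"
  have ecb: "bij_betw (ec a c) (C a c) {0..<s}" if ha: "a \<in> rho ` Dl" and hc: "c \<in> kap ` Dl" for a c
  proof -
    obtain u v where uv: "u \<in> Dl" "v \<in> Dl" "a = rho u" "c = kap v" using ha hc by auto
    have "card (C a c) = s" unfolding C_def using cell[OF uv(1,2)] uv by simp
    moreover have "finite (C a c)" unfolding C_def using fin by simp
    ultimately have "\<exists>h. bij_betw h (C a c) {0..<s}" using ex_bij_betw_finite_nat by metis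
    then show ?thesis unfolding ec_def by (rule someI_ex)
  qed
  define f where "f = (\<lambda>w. ((er (rho w), ek (kap w)), ec (rho w) (kap w) w))"
  have inj_er: "\<And>u v. u \<in> Dl \<Longrightarrow> v \<in> Dl \<Longrightarrow> er (rho u) = er (rho v) \<longleftrightarrow> rho u = rho v"
    using er unfolding bij_betw_def inj_on_def by (metis imageI)
  have inj_ek: "\<And>u v. u \<in> Dl \<Longrightarrow> v \<in> Dl \<Longrightarrow> ek (kap u) = ek (kap v) \<longleftrightarrow> kap u = kap v"
    using ek unfolding bij_betw_def inj_on_def by (metis imageI)
  have inC: "w \<in> C (rho w) (kap w)" if "w \<in> Dl" for w unfolding C_def using that by simp
  have same_cell: "u = v \<longleftrightarrow> ec (rho u) (kap u) u = ec (rho v) (kap v) v"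
    if uv: "u \<in> Dl" "v \<in> Dl" "rho u = rho v" "kap u = kap v" for u v
  proof -
    have b: "bij_betw (ec (rho u) (kap u)) (C (rho u) (kap u)) {0..<s}" using ecb uv by auto
    have "v \<in> C (rho u) (kap u)" using inC[OF uv(2)] uv by simp
    then show ?thesis using b inC[OF uv(1)] uv unfolding bij_betw_def inj_on_def by auto
  qed
  have bij: "bij_betw f Dl (cext_vertices s (grid_vertices ?m ?n))"
    unfolding bij_betw_def
  proof
    show "inj_on f Dl"
    proof (rule inj_onI)
      fix u v assume u: "u \<in> Dl" and v: "v \<in> Dl" and e: "f u = f v"
      have r: "rho u = rho v" using e inj_er[OF u v] unfolding f_def by simp
      have k: "kap u = kap v" using e inj_ek[OF u v] unfolding f_def by simp
      show "u = v" using same_cell[OF u v r k] e unfolding f_def by simp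
    qed
    show "f ` Dl = cext_vertices s (grid_vertices ?m ?n)"
    proof
      show "f ` Dl \<subseteq> cext_vertices s (grid_vertices ?m ?n)"
      proof
        fix p assume "p \<in> f ` Dl"
        then obtain w where w: "w \<in> Dl" "p = f w" by auto
        have "er (rho w) < ?m" using er w unfolding bij_betw_def by auto
        moreover have "ek (kap w) < ?n" using ek w unfolding bij_betw_def by auto
        moreover have "ec (rho w) (kap w) w < s" using ecb[of "rho w" "kap w"] w inC[OF w(1)] unfolding bij_betw_def by auto
        ultimately show "p \<in> cext_vertices s (grid_vertices ?m ?n)"
          unfolding cext_vertices_def grid_vertices_def f_def w by simp
      qed
      show "cext_vertices s (grid_vertices ?m ?n) \<subseteq> f ` Dl"
      proof
        fix p assume p: "p \<in> cext_vertices s (grid_vertices ?m ?n)"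
        obtain i j t where ijt: "p = ((i, j), t)" "i < ?m" "j < ?n" "t < s"
          using p unfolding cext_vertices_def grid_vertices_def by auto
        obtain a where a: "a \<in> rho ` Dl" "er a = i" using er ijt unfolding bij_betw_def by (metis atLeastLessThan_iff imageE zero_le)
        obtain c where c: "c \<in> kap ` Dl" "ek c = j" using ek ijt unfolding bij_betw_def by (metis atLeastLessThan_iff imageE zero_le)
        obtain w where w: "w \<in> C a c" "ec a c w = t" using ecb[OF a(1) c(1)] ijt unfolding bij_betw_def
          by (metis atLeastLessThan_iff imageE zero_le)
        have wD: "w \<in> Dl" "rho w = a" "kap w = c" using w unfolding C_def by auto
        have "f w = p" unfolding f_def ijt using wD a c w by simp
        then show "p \<in> f ` Dl" using wD by auto
      qed
    qed
  qed
  have adjf: "adjD u v \<longleftrightarrow> cext_adj grid_adj (f u) (f v)" if u: "u \<in> Dl" and v: "v \<in> Dl" for u v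
  proof (cases "rho u = rho v \<and> kap u = kap v")
    case True
    then show ?thesis using adjc[OF u v] same_cell[OF u v] inj_er[OF u v] inj_ek[OF u v]
      unfolding f_def cext_adj_def by auto
  next
    case False
    then have "u \<noteq> v" by auto
    then show ?thesis using adjc[OF u v] inj_er[OF u v] inj_ek[OF u v] False
      unfolding f_def cext_adj_def grid_adj_def by auto
  qed
  show ?thesis unfolding graph_iso_def using bij adjf by blast
qed

context setting begin

lemma Lx_img: assumes x: "x \<in> V" shows "lnx x ` Nb x = Lx x"
proof
  show "lnx x ` Nb x \<subseteq> Lx x" using ln1 unfolding Nb_def Lx_def by auto
  show "Lx x \<subseteq> lnx x ` Nb x"
  proof
    fix L assume L: "L \<in> Lx x"
    then have LC: "L \<in> CC" "x \<in> L" unfolding Lx_def by auto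
    have "real (card L) = \<beta> + 1" using line_card LC by simp
    then have "card L \<ge> 2" using beta_gt ha2 by simp
    then have "\<exists>z\<in>L. z \<noteq> x" by (metis card_le_Suc0_iff_eq not_less_eq_eq numeral_2_eq_2 card.infinite zero_le
         le_zero_eq nat.simps(3))
    then obtain z where z: "z \<in> L" "z \<noteq> x" by blast
    then have xz: "adj x z" using line_adj LC by metis
    have "lnx x z = L" using ln2[OF xz LC] z by simp
    moreover have "z \<in> Nb x" using xz adjV unfolding Nb_def by auto
    ultimately show "L \<in> lnx x ` Nb x" by blast
  qed
qed

lemma part3: assumes x: "x \<in> V"
  shows "\<exists>s m n :: nat. real s = \<alpha> \<and> real m = \<beta> / \<alpha> \<and> real n = qint b D \<and>
        graph_iso (local_vertices V adj x) (local_adj V adj x)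
                  (cext_vertices s (grid_vertices m n)) (cext_adj grid_adj)"
proof -
  obtain s :: nat where s: "real s = \<alpha>" using alpha_nat by blast
  have LV: "local_vertices V adj x = Nb x" unfolding local_vertices_def Nb_def by simp
  have finN: "finite (Nb x)" unfolding Nb_def using finV by simp
  have adjc: "local_adj V adj x u v \<longleftrightarrow> u \<noteq> v \<and> (Row x u = Row x v \<or> lnx x u = lnx x v)"
    if "u \<in> Nb x" "v \<in> Nb x" for u v
    using that adj_char[of x u v] unfolding local_adj_def local_vertices_def Nb_def by auto
  have cell: "card {w\<in>Nb x. Row x w = Row x u \<and> lnx x w = lnx x v} = s"
    if u: "u \<in> Nb x" and v: "v \<in> Nb x" for u v
  proof -
    have xu: "adj x u" and xv: "adj x v" using u v unfolding Nb_def by auto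
    have "{w\<in>Nb x. Row x w = Row x u \<and> lnx x w = lnx x v} = Row x u \<inter> lnx x v"
    proof
      show "{w\<in>Nb x. Row x w = Row x u \<and> lnx x w = lnx x v} \<subseteq> Row x u \<inter> lnx x v"
      proof
        fix w assume "w \<in> {w\<in>Nb x. Row x w = Row x u \<and> lnx x w = lnx x v}"
        then have w: "adj x w" "Row x w = Row x u" "lnx x w = lnx x v" unfolding Nb_def by auto
        show "w \<in> Row x u \<inter> lnx x v" using y_in_Row[OF w(1)] ln1[OF w(1)] w by auto
      qed
      show "Row x u \<inter> lnx x v \<subseteq> {w\<in>Nb x. Row x w = Row x u \<and> lnx x w = lnx x v}"
      proof
        fix w assume w: "w \<in> Row x u \<inter> lnx x v"
        have xw: "adj x w" using Row_Nb[OF xu] w by auto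
        have "Row x w = Row x u" using Row_mem[OF xu] w by auto
        moreover have "lnx x w = lnx x v" using ln2[OF xw] ln1[OF xv] w by auto
        moreover have "w \<in> Nb x" using xw adjV unfolding Nb_def by auto
        ultimately show "w \<in> {w\<in>Nb x. Row x w = Row x u \<and> lnx x w = lnx x v}" by simp
      qed
    qed
    moreover have "real (card (Row x u \<inter> lnx x v)) = \<alpha>" using Row_line_card[OF xu] ln1[OF xv] by simp
    ultimately show ?thesis using s by simp
  qed
  have iso: "graph_iso (Nb x) (local_adj V adj x) (cext_vertices s (grid_vertices (card (Row x ` Nb x)) (card (lnx x ` Nb x)))) (cext_adj grid_adj)"
    by (rule grid_iso_abs[OF finN adjc cell])
  let ?m = "card (Row x ` Nb x)" and ?n = "card (lnx x ` Nb x)"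
  have n: "real ?n = q D" using Lx_img[OF x] lines_count[OF x] unfolding Lx_def by simp
  have "card (Nb x) = card (cext_vertices s (grid_vertices ?m ?n))"
    using iso unfolding graph_iso_def by (metis bij_betw_same_card)
  also have "\<dots> = ?m * ?n * s" unfolding cext_vertices_def grid_vertices_def by (simp add: card_cartesian_product)
  finally have "real (card (Nb x)) = real ?m * q D * \<alpha>" using n s by simp
  moreover have "real (card (Nb x)) = q D * \<beta>" using degree[OF x] unfolding Nb_def kk_def by simp
  ultimately have "real ?m * \<alpha> = \<beta>" using qD_ge by (simp add: algebra_simps)
  then have m: "real ?m = \<beta> / \<alpha>" using ha2 by (simp add: field_simps)
  have iso2: "graph_iso (local_vertices V adj x) (local_adj V adj x) (cext_vertices s (grid_vertices ?m ?n)) (cext_adj grid_adj)"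
    using iso LV by simp
  show ?thesis
    by (rule exI[of _ s], rule exI[of _ ?m], rule exI[of _ ?n]) (use s m n iso2 in simp)
qed

lemma assembly_form: assumes M: "assembly V adj CC M" and x: "x \<in> M"
  shows "\<exists>y. adj x y \<and> M = insert x (Row x y)"
proof -
  have mc: "maximal_clique V adj M" and MC: "M \<notin> CC" using M unfolding assembly_def by auto
  have cl: "is_clique V adj M" using mc unfolding maximal_clique_def by simp
  have MV: "M \<subseteq> V" using cl unfolding is_clique_def by simp
  have xV: "x \<in> V" using MV x by auto
  have madj: "u \<in> M \<Longrightarrow> v \<in> M \<Longrightarrow> u \<noteq> v \<Longrightarrow> adj u v" for u v using cl unfolding is_clique_def by simp
  have maxi: "is_clique V adj C' \<Longrightarrow> M \<subseteq> C' \<Longrightarrow> C' = M" for C' using mc unfolding maximal_clique_def by simp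
  have "\<exists>y\<in>M. \<exists>z\<in>M. y \<noteq> x \<and> z \<noteq> x \<and> lnx x y \<noteq> lnx x z"
  proof (rule ccontr)
    assume nc: "\<not> ?thesis"
    obtain L where L: "L \<in> CC" "M \<subseteq> L"
    proof (cases "M - {x} = {}")
      case True
      have "real (card {y\<in>V. adj x y}) = kk" using degree[OF xV] .
      then have "card {y\<in>V. adj x y} \<noteq> 0" using kk_pos by auto
      then obtain y where xy: "adj x y" by (metis (no_types, lifting) Collect_empty_eq card.empty)
      have "M \<subseteq> lnx x y" using True ln1[OF xy] x by auto
      then show ?thesis using that ln1[OF xy] by blast
    next
      case False
      then obtain y0 where y0: "y0 \<in> M" "y0 \<noteq> x" by auto
      have xy0: "adj x y0" using madj x y0 by auto
      have "M \<subseteq> lnx x y0"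
      proof
        fix y assume y: "y \<in> M"
        show "y \<in> lnx x y0"
        proof (cases "y = x")
          case True then show ?thesis using ln1[OF xy0] by simp
        next
          case False
          then have "adj x y" using madj x y by auto
          moreover have "lnx x y = lnx x y0" using nc y y0 False by blast
          ultimately show ?thesis using ln1 by metis
        qed
      qed
      then show ?thesis using that ln1[OF xy0] by blast
    qed
    have "L = M" using maxi[OF line_clique[OF L(1)] L(2)] .
    then show False using MC L by simp
  qed
  then obtain y z where yz: "y \<in> M" "z \<in> M" "y \<noteq> x" "z \<noteq> x" "lnx x y \<noteq> lnx x z" by blast
  have xy: "adj x y" and xz: "adj x z" using madj x yz by auto
  have "y \<noteq> z" using yz by auto
  then have "adj y z" using madj yz by auto
  then have ryz: "Row x y = Row x z" using adj_char[OF xy xz] yz(5) by auto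
  have sub: "M \<subseteq> insert x (Row x y)"
  proof
    fix u assume u: "u \<in> M"
    show "u \<in> insert x (Row x y)"
    proof (cases "u = x")
      case False
      then have xu: "adj x u" using madj x u by auto
      have "Row x u = Row x y"
      proof (cases "lnx x u = lnx x y")
        case False
        then have "u \<noteq> y" by auto
        then have "adj u y" using madj u yz by auto
        then show ?thesis using adj_char[OF xu xy] False by auto
      next
        case True
        then have "lnx x u \<noteq> lnx x z" using yz by simp
        then have "u \<noteq> z" by auto
        then have "adj u z" using madj u yz by auto
        then show ?thesis using adj_char[OF xu xz] ryz True yz by auto
      qed
      then show ?thesis using y_in_Row[OF xu] by auto
    qed simp
  qed
  have "is_clique V adj (insert x (Row x y))"
    unfolding is_clique_def
  proof (intro conjI ballI impI)
    show "insert x (Row x y) \<subseteq> V" using xV Row_Nb[OF xy] adjV by blast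
    fix u v assume u: "u \<in> insert x (Row x y)" and v: "v \<in> insert x (Row x y)" and uv: "u \<noteq> v"
    show "adj u v" using u v uv Row_Nb[OF xy] Row_clique[OF xy] adj_sym by blast
  qed
  then have "insert x (Row x y) = M" using maxi sub by blast
  then show ?thesis using xy by blast
qed

lemma x_notin_Row: "adj x y \<Longrightarrow> x \<notin> Row x y" using Row_Nb adj_irr by blast

lemma finRow: "adj x y \<Longrightarrow> finite (Row x y)"
proof -
  assume xy: "adj x y"
  have "Row x y \<subseteq> V" using Row_Nb[OF xy] adjV by blast
  then show ?thesis using finV finite_subset by blast
qed

lemma part1: assumes L: "L \<in> CC" and M: "assembly V adj CC M" and ne: "L \<inter> M \<noteq> {}"
  shows "real (card (L \<inter> M)) = \<alpha> + 1"
proof -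
  obtain x where x: "x \<in> L" "x \<in> M" using ne by auto
  obtain y where xy: "adj x y" and Me: "M = insert x (Row x y)" using assembly_form[OF M x(2)] by blast
  have "L \<inter> M = insert x (Row x y \<inter> L)" using Me x by auto
  moreover have "x \<notin> Row x y \<inter> L" using x_notin_Row[OF xy] by simp
  moreover have "finite (Row x y \<inter> L)" using finRow[OF xy] by simp
  ultimately have "card (L \<inter> M) = Suc (card (Row x y \<inter> L))" by simp
  then show ?thesis using Row_line_card[OF xy L x(1)] by simp
qed

lemma part2: assumes M: "assembly V adj CC M" and u: "u \<in> V" "u \<notin> M" and ex: "\<exists>w\<in>M. adj u w"
  shows "real (card {w\<in>M. adj u w}) = \<alpha> + 1 \<and> (\<exists>!L. L \<in> CC \<and> u \<in> L \<and> L \<inter> M \<noteq> {})"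
proof -
  obtain w where w: "w \<in> M" "adj u w" using ex by blast
  obtain y where wy: "adj w y" and Me: "M = insert w (Row w y)" using assembly_form[OF M w(1)] by blast
  have wu: "adj w u" using adj_sym w by simp
  have nb: "{v\<in>M. adj u v} = insert w (Row w y \<inter> lnx w u)"
  proof
    show "{v\<in>M. adj u v} \<subseteq> insert w (Row w y \<inter> lnx w u)"
    proof
      fix v assume v: "v \<in> {v\<in>M. adj u v}"
      show "v \<in> insert w (Row w y \<inter> lnx w u)"
      proof (cases "v = w")
        case False
        then have vR: "v \<in> Row w y" using v Me by auto
        have wv: "adj w v" using Row_Nb[OF wy vR] .
        have uv: "adj u v" using v by simp
        have "Row w u \<noteq> Row w v"
        proof
          assume "Row w u = Row w v"
          then have "u \<in> Row w y" using y_in_Row[OF wu] Row_mem[OF wy vR] by simp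
          then show False using u Me by auto
        qed
        then have "lnx w u = lnx w v" using adj_char[OF wu wv] uv by auto
        then show ?thesis using vR ln1[OF wv] by auto
      qed simp
    qed
    show "insert w (Row w y \<inter> lnx w u) \<subseteq> {v\<in>M. adj u v}"
    proof
      fix v assume v: "v \<in> insert w (Row w y \<inter> lnx w u)"
      show "v \<in> {v\<in>M. adj u v}"
      proof (cases "v = w")
        case False
        then have vR: "v \<in> Row w y" "v \<in> lnx w u" using v by auto
        have "v \<noteq> u" using vR u Me by auto
        then have "adj u v" using line_adj ln1[OF wu] vR by metis
        then show ?thesis using vR Me by auto
      qed (use w in auto)
    qed
  qed
  have c: "real (card {v\<in>M. adj u v}) = \<alpha> + 1"
  proof -
    have "w \<notin> Row w y \<inter> lnx w u" using x_notin_Row[OF wy] by simp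
    moreover have "finite (Row w y \<inter> lnx w u)" using finRow[OF wy] by simp
    ultimately have "card {v\<in>M. adj u v} = Suc (card (Row w y \<inter> lnx w u))" unfolding nb by simp
    then show ?thesis using Row_line_card[OF wy] ln1[OF wu] by simp
  qed
  have "\<exists>!L. L \<in> CC \<and> u \<in> L \<and> L \<inter> M \<noteq> {}"
  proof
    show "lnx w u \<in> CC \<and> u \<in> lnx w u \<and> lnx w u \<inter> M \<noteq> {}" using ln1[OF wu] w by auto
    fix L assume L: "L \<in> CC \<and> u \<in> L \<and> L \<inter> M \<noteq> {}"
    then obtain v where v: "v \<in> L" "v \<in> M" by auto
    have "v \<noteq> u" using v u by auto
    then have uv: "adj u v" using line_adj L v by metis
    then have "v \<in> insert w (Row w y \<inter> lnx w u)" using nb v by blast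
    then have "v \<in> lnx w u" using ln1[OF wu] by auto
    then show "L = lnx w u" using line_uniq[OF uv] L v ln1[OF wu] by blast
  qed
  then show ?thesis using c by simp
qed

end

theorem theorem24:
  fixes V :: "'a set" and adj :: "'a \<Rightarrow> 'a \<Rightarrow> bool" and \<C> :: "'a set set"
    and D :: nat and b :: int and \<alpha> \<beta> :: real
  assumes drg: "classical_drg V adj D b \<alpha> \<beta>"
    and hb: "b \<ge> 2" and ha1: "real_of_int b - 1 \<ge> \<alpha>" and ha2: "\<alpha> \<ge> 1" and hD: "D \<ge> 3"
    and geom: "geometric V adj \<C>"
    and pasch: "dual_pasch V adj \<C>"
  shows
    "(\<forall>L\<in>\<C>. \<forall>M. assembly V adj \<C> M \<longrightarrow> L \<inter> M \<noteq> {} \<longrightarrow>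
        real (card (L \<inter> M)) = \<alpha> + 1)
   \<and> (\<forall>M u. assembly V adj \<C> M \<longrightarrow> u \<in> V \<longrightarrow> u \<notin> M \<longrightarrow> (\<exists>w\<in>M. adj u w) \<longrightarrow>
        real (card {w\<in>M. adj u w}) = \<alpha> + 1 \<and>
        (\<exists>!L. L \<in> \<C> \<and> u \<in> L \<and> L \<inter> M \<noteq> {}))
   \<and> (\<forall>x\<in>V. \<exists>s m n :: nat. real s = \<alpha> \<and> real m = \<beta> / \<alpha> \<and> real n = qint b D \<and>
        graph_iso (local_vertices V adj x) (local_adj V adj x)
                  (cext_vertices s (grid_vertices m n)) (cext_adj grid_adj))"
proof -
  interpret setting V adj "\<C>" D b \<alpha> \<beta>
    using drg hb ha2 hD geom pasch by unfold_locales
  have p1: "\<forall>L\<in>\<C>. \<forall>M. assembly V adj \<C> M \<longrightarrow> L \<inter> M \<noteq> {} \<longrightarrow> real (card (L \<inter> M)) = \<alpha> + 1"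
    using part1 by blast
  have p2: "\<forall>M u. assembly V adj \<C> M \<longrightarrow> u \<in> V \<longrightarrow> u \<notin> M \<longrightarrow> (\<exists>w\<in>M. adj u w) \<longrightarrow>
        real (card {w\<in>M. adj u w}) = \<alpha> + 1 \<and> (\<exists>!L. L \<in> \<C> \<and> u \<in> L \<and> L \<inter> M \<noteq> {})"
    using part2 by blast
  have p3: "\<forall>x\<in>V. \<exists>s m n :: nat. real s = \<alpha> \<and> real m = \<beta> / \<alpha> \<and> real n = qint b D \<and>
        graph_iso (local_vertices V adj x) (local_adj V adj x)
                  (cext_vertices s (grid_vertices m n)) (cext_adj grid_adj)"
    using part3 by blast
  show ?thesis using p1 p2 p3 by blast
qed

end
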